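(* Let $\mathcal{S}$ be finite, $\Pi$ irreducible stochastic on $\mathcal{S}$, $Q=(q(y))$ its invariant distribution, and $X(t)=Z_{N(t)}$ the continuous-time chain obtained from a Markov chain $(Z_n)$ with transition matrix $\Pi$ and initial law $P(0)$ with positive entries, time-changed by an independent rate-one Poisson process $N$; let $\mathbb{P}$ be the underlying measure, $p(t,y):=\mathbb{P}(X(t)=y)$, $P(t)=(p(t,y))_y$, $\ell(t,y):=p(t,y)/q(y)$, and let $\mathbb{Q}$ be a probability measure under which $X$ has the same dynamics but initial law $Q$. Fix $T\in(0,\infty)$, let $\widehat X(s):=X(T-s)$ and $\widehat{\mathcal{G}}(s):=\sigma(\widehat X(u),0\le u\le s)$. Then: (i) $\ell(T-s,\widehat X(s))\log\ell(T-s,\widehat X(s))$, $0\le s\le T$, is a $(\widehat{\mathcal{G}},\mathbb{Q})$-submartingale; (ii) the relative entropy $H(P(t)\,|\,Q):=\sum_y p(t,y)\log(p(t,y)/q(y))$ is non-negative, non-increasing in $t$, and $\lim_{t\to\infty}H(P(t)\,|\,Q)=0$; (iii) $\log\ell(T-s,\widehat X(s))$, $0\le s\le T$, is a $(\widehat{\mathcal{G}},\mathbb{P})$-submartingale. *)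

theory Defs
  imports "HOL-Probability.Probability"
begin

definition stochastic_matrix :: "('s::finite \<Rightarrow> 's \<Rightarrow> real) \<Rightarrow> bool" where
  "stochastic_matrix P \<longleftrightarrow> (\<forall>x y. 0 \<le> P x y) \<and> (\<forall>x. (\<Sum>y\<in>UNIV. P x y) = 1)"

fun mpow :: "('s::finite \<Rightarrow> 's \<Rightarrow> real) \<Rightarrow> nat \<Rightarrow> 's \<Rightarrow> 's \<Rightarrow> real" where
  "mpow P 0 = (\<lambda>x y. if x = y then 1 else 0)"
| "mpow P (Suc n) = (\<lambda>x y. \<Sum>z\<in>UNIV. mpow P n x z * P z y)"

definition irreducible_matrix :: "('s::finite \<Rightarrow> 's \<Rightarrow> real) \<Rightarrow> bool" where
  "irreducible_matrix P \<longleftrightarrow> (\<forall>x y. \<exists>n. 0 < mpow P n x y)"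

definition invariant_distribution :: "('s::finite \<Rightarrow> 's \<Rightarrow> real) \<Rightarrow> ('s \<Rightarrow> real) \<Rightarrow> bool" where
  "invariant_distribution P q \<longleftrightarrow>
     (\<forall>y. 0 \<le> q y) \<and> (\<Sum>y\<in>UNIV. q y) = 1 \<and> (\<forall>y. (\<Sum>x\<in>UNIV. q x * P x y) = q y)"

definition markov_chain ::
  "'w measure \<Rightarrow> ('s::finite \<Rightarrow> 's \<Rightarrow> real) \<Rightarrow> ('s \<Rightarrow> real) \<Rightarrow> (nat \<Rightarrow> 'w \<Rightarrow> 's) \<Rightarrow> bool" where
  "markov_chain M P p0 Z \<longleftrightarrow>
     (\<forall>n. Z n \<in> measurable M (count_space UNIV)) \<and>
     (\<forall>n (xs :: nat \<Rightarrow> 's).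
        measure M {w \<in> space M. \<forall>i\<le>n. Z i w = xs i}
          = p0 (xs 0) * (\<Prod>i<n. P (xs i) (xs (Suc i))))"

definition poisson_process :: "'w measure \<Rightarrow> (real \<Rightarrow> 'w \<Rightarrow> nat) \<Rightarrow> bool" where
  "poisson_process M N \<longleftrightarrow>
     (\<forall>t. N t \<in> measurable M (count_space UNIV)) \<and>
     (\<forall>w\<in>space M. N 0 w = 0) \<and>
     (\<forall>w\<in>space M. \<forall>s t. 0 \<le> s \<longrightarrow> s \<le> t \<longrightarrow> N s w \<le> N t w) \<and>
     (\<forall>(ts :: nat \<Rightarrow> real) k (ns :: nat \<Rightarrow> nat).
        ts 0 = 0 \<longrightarrow> (\<forall>i<k. ts i < ts (Suc i)) \<longrightarrow>
        measure M {w \<in> space M. \<forall>i<k. N (ts (Suc i)) w - N (ts i) w = ns i}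
          = (\<Prod>i<k. (ts (Suc i) - ts i) ^ ns i / fact (ns i) * exp (- (ts (Suc i) - ts i))))"

definition uniformized_chain ::
  "'w measure \<Rightarrow> ('s::finite \<Rightarrow> 's \<Rightarrow> real) \<Rightarrow> ('s \<Rightarrow> real)
     \<Rightarrow> (nat \<Rightarrow> 'w \<Rightarrow> 's) \<Rightarrow> (real \<Rightarrow> 'w \<Rightarrow> nat) \<Rightarrow> bool" where
  "uniformized_chain M P p0 Z N \<longleftrightarrow>
     prob_space M \<and> markov_chain M P p0 Z \<and> poisson_process M N \<and>
     prob_space.indep_set M
       (sigma_sets (space M) {Z n -` A \<inter> space M | n A. True})
       (sigma_sets (space M) {N t -` A \<inter> space M | t A. 0 \<le> t})"

definition ctmc :: "(nat \<Rightarrow> 'w \<Rightarrow> 's) \<Rightarrow> (real \<Rightarrow> 'w \<Rightarrow> nat) \<Rightarrow> real \<Rightarrow> 'w \<Rightarrow> 's" where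
  "ctmc Z N t w = Z (N t w) w"

definition rev_filtration :: "'w measure \<Rightarrow> (real \<Rightarrow> 'w \<Rightarrow> 's) \<Rightarrow> real \<Rightarrow> real \<Rightarrow> 'w measure" where
  "rev_filtration M X T s =
     sigma (space M) {X (T - u) -` A \<inter> space M | u A. 0 \<le> u \<and> u \<le> s}"

definition submartingale_on ::
  "'w measure \<Rightarrow> (real \<Rightarrow> 'w measure) \<Rightarrow> real set \<Rightarrow> (real \<Rightarrow> 'w \<Rightarrow> real) \<Rightarrow> bool" where
  "submartingale_on M F I Y \<longleftrightarrow>
     (\<forall>s\<in>I. subalgebra M (F s)) \<and>
     (\<forall>s\<in>I. \<forall>u\<in>I. s \<le> u \<longrightarrow> sets (F s) \<subseteq> sets (F u)) \<and>
     (\<forall>s\<in>I. Y s \<in> borel_measurable (F s) \<and> integrable M (Y s)) \<and>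
     (\<forall>s\<in>I. \<forall>u\<in>I. s \<le> u \<longrightarrow> (AE w in M. Y s w \<le> real_cond_exp M (F s) (Y u) w))"

definition rel_entropy :: "('s::finite \<Rightarrow> real) \<Rightarrow> ('s \<Rightarrow> real) \<Rightarrow> real" where
  "rel_entropy p q = (\<Sum>y\<in>UNIV. p y * ln (p y / q y))"

end

theory Submission
  imports Defs
begin


definition pois :: "real \<Rightarrow> nat \<Rightarrow> real" where
  "pois \<tau> n = \<tau> ^ n / fact n * exp (- \<tau>)"

definition Kt :: "('s::finite \<Rightarrow> 's \<Rightarrow> real) \<Rightarrow> real \<Rightarrow> 's \<Rightarrow> 's \<Rightarrow> real" where
  "Kt P \<tau> a b = (\<Sum>e. pois \<tau> e * mpow P e a b)"

lemma pois_nonneg: "0 \<le> \<tau> \<Longrightarrow> 0 \<le> pois \<tau> n"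
  by (simp add: pois_def)

lemma pois_sums: "(\<lambda>n. pois \<tau> n) sums 1"
proof -
  have "(\<lambda>n. \<tau>^n /\<^sub>R fact n) sums exp \<tau>" by (rule exp_converges)
  then have "(\<lambda>n. \<tau>^n / fact n * exp (-\<tau>)) sums (exp \<tau> * exp (-\<tau>))"
    by (intro sums_mult2) (simp add: divide_inverse mult.commute)
  then show ?thesis by (simp add: pois_def exp_minus)
qed

lemma pois_zero: "pois 0 n = (if n = 0 then 1 else 0)"
  by (simp add: pois_def)

lemma mpow_nonneg: "stochastic_matrix P \<Longrightarrow> 0 \<le> mpow P n a b"
  by (induction n arbitrary: b) (auto simp: stochastic_matrix_def intro!: sum_nonneg)

lemma mpow_rowsum: "stochastic_matrix P \<Longrightarrow> (\<Sum>b\<in>UNIV. mpow P n a b) = 1"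
proof (induction n)
  case 0 then show ?case by simp
next
  case (Suc n)
  have "(\<Sum>b\<in>UNIV. mpow P (Suc n) a b) = (\<Sum>z\<in>UNIV. mpow P n a z * (\<Sum>b\<in>UNIV. P z b))"
    by (simp add: sum_distrib_left) (rule sum.swap)
  also have "\<dots> = 1" using Suc by (simp add: stochastic_matrix_def)
  finally show ?case .
qed

lemma mpow_le1: "stochastic_matrix P \<Longrightarrow> mpow P n a b \<le> 1"
proof -
  assume s: "stochastic_matrix P"
  have "mpow P n a b \<le> (\<Sum>b\<in>UNIV. mpow P n a b)"
    by (rule member_le_sum) (auto intro: mpow_nonneg[OF s])
  then show ?thesis using mpow_rowsum[OF s] by simp
qed

lemma Kt_summable: "stochastic_matrix P \<Longrightarrow> 0 \<le> \<tau> \<Longrightarrow> summable (\<lambda>e. pois \<tau> e * mpow P e a b)"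
proof -
  assume s: "stochastic_matrix P" and t: "0 \<le> \<tau>"
  show ?thesis
  proof (rule summable_comparison_test[OF _ sums_summable[OF pois_sums[of \<tau>]]])
    show "\<exists>N. \<forall>n\<ge>N. norm (pois \<tau> n * mpow P n a b) \<le> pois \<tau> n"
      using mpow_nonneg[OF s] mpow_le1[OF s] pois_nonneg[OF t]
      by (auto intro!: mult_left_le simp: abs_mult)
  qed
qed

lemma Kt_sums: "stochastic_matrix P \<Longrightarrow> 0 \<le> \<tau> \<Longrightarrow> (\<lambda>e. pois \<tau> e * mpow P e a b) sums Kt P \<tau> a b"
  unfolding Kt_def by (rule summable_sums[OF Kt_summable])

lemma Kt_nonneg: "stochastic_matrix P \<Longrightarrow> 0 \<le> \<tau> \<Longrightarrow> 0 \<le> Kt P \<tau> a b"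
  unfolding Kt_def by (intro suminf_nonneg Kt_summable) (auto intro!: mult_nonneg_nonneg mpow_nonneg pois_nonneg)

lemma Kt_ge_term: "stochastic_matrix P \<Longrightarrow> 0 \<le> \<tau> \<Longrightarrow> pois \<tau> n * mpow P n a b \<le> Kt P \<tau> a b"
proof -
  assume s: "stochastic_matrix P" and t: "0 \<le> \<tau>"
  have "sum (\<lambda>e. pois \<tau> e * mpow P e a b) {n} \<le> Kt P \<tau> a b"
    unfolding Kt_def using s t
    by (intro sum_le_suminf Kt_summable) (auto intro!: mult_nonneg_nonneg mpow_nonneg pois_nonneg)
  then show ?thesis by simp
qed

lemma Kt_zero: "stochastic_matrix P \<Longrightarrow> Kt P 0 a b = (if a = b then 1 else 0)"
proof -
  assume s: "stochastic_matrix P"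
  have "(\<lambda>e. pois 0 e * mpow P e a b) = (\<lambda>e. if e = 0 then (if a = b then 1 else 0) else 0)"
    by (auto simp: pois_zero)
  moreover have "(\<lambda>e. if e = 0 then (if a = b then 1 else 0) else 0) sums (if a = b then 1 else (0::real))"
    using sums_single[of 0 "\<lambda>_. if a = b then 1 else (0::real)"] by simp
  ultimately show ?thesis using Kt_sums[OF s, of 0 a b] sums_unique2 by force
qed

lemma Kt_rowsum: "stochastic_matrix P \<Longrightarrow> 0 \<le> \<tau> \<Longrightarrow> (\<Sum>b\<in>UNIV. Kt P \<tau> a b) = 1"
proof -
  assume s: "stochastic_matrix P" and t: "0 \<le> \<tau>"
  have "(\<lambda>e. \<Sum>b\<in>UNIV. pois \<tau> e * mpow P e a b) sums (\<Sum>b\<in>UNIV. Kt P \<tau> a b)"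
    by (intro sums_sum Kt_sums[OF s t])
  moreover have "(\<lambda>e. \<Sum>b\<in>UNIV. pois \<tau> e * mpow P e a b) = pois \<tau>"
    by (simp add: sum_distrib_left[symmetric] mpow_rowsum[OF s])
  ultimately show ?thesis using pois_sums sums_unique2 by metis
qed

lemma mpow_invariant: "invariant_distribution P q \<Longrightarrow> (\<Sum>a\<in>UNIV. q a * mpow P n a b) = q b"
proof (induction n arbitrary: b)
  case 0
  have "(\<Sum>a\<in>UNIV. q a * (if a = b then 1 else 0)) = q b" by (simp add: if_distrib cong: if_cong)
  then show ?case by simp
next
  case (Suc n)
  have "(\<Sum>a\<in>UNIV. q a * mpow P (Suc n) a b) = (\<Sum>z\<in>UNIV. (\<Sum>a\<in>UNIV. q a * mpow P n a z) * P z b)"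
    by (simp add: sum_distrib_left sum_distrib_right mult.assoc) (rule sum.swap)
  also have "\<dots> = q b" using Suc by (simp add: invariant_distribution_def)
  finally show ?case .
qed

lemma Kt_invariant: "stochastic_matrix P \<Longrightarrow> invariant_distribution P q \<Longrightarrow> 0 \<le> \<tau> \<Longrightarrow>
   (\<Sum>a\<in>UNIV. q a * Kt P \<tau> a b) = q b"
proof -
  assume s: "stochastic_matrix P" and i: "invariant_distribution P q" and t: "0 \<le> \<tau>"
  have "(\<lambda>e. \<Sum>a\<in>UNIV. q a * (pois \<tau> e * mpow P e a b)) sums (\<Sum>a\<in>UNIV. q a * Kt P \<tau> a b)"
    by (intro sums_sum sums_mult Kt_sums[OF s t])
  moreover have "(\<lambda>e. \<Sum>a\<in>UNIV. q a * (pois \<tau> e * mpow P e a b)) = (\<lambda>e. pois \<tau> e * q b)"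
  proof
    fix e
    have "(\<Sum>a\<in>UNIV. q a * (pois \<tau> e * mpow P e a b)) = pois \<tau> e * (\<Sum>a\<in>UNIV. q a * mpow P e a b)"
      by (simp add: sum_distrib_left mult.left_commute)
    then show "(\<Sum>a\<in>UNIV. q a * (pois \<tau> e * mpow P e a b)) = pois \<tau> e * q b"
      using mpow_invariant[OF i] by simp
  qed
  moreover have "(\<lambda>e. pois \<tau> e * q b) sums (1 * q b)" by (intro sums_mult2 pois_sums)
  ultimately show ?thesis using sums_unique2 by fastforce
qed


locale uchain =
  fixes M :: "'w measure" and Pi :: "'s::finite \<Rightarrow> 's \<Rightarrow> real" and p0 :: "'s \<Rightarrow> real"
    and Z :: "nat \<Rightarrow> 'w \<Rightarrow> 's" and N :: "real \<Rightarrow> 'w \<Rightarrow> nat"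
  assumes uc: "uniformized_chain M Pi p0 Z N" and st: "stochastic_matrix Pi"
begin

sublocale prob_space M using uc by (simp add: uniformized_chain_def)

lemma Z_meas[measurable]: "Z n \<in> measurable M (count_space UNIV)"
  using uc by (simp add: uniformized_chain_def markov_chain_def)

lemma N_meas[measurable]: "N t \<in> measurable M (count_space UNIV)"
  using uc by (simp add: uniformized_chain_def poisson_process_def)

lemma N0: "w \<in> space M \<Longrightarrow> N 0 w = 0"
  using uc by (simp add: uniformized_chain_def poisson_process_def)

lemma Nmono: "w \<in> space M \<Longrightarrow> 0 \<le> s \<Longrightarrow> s \<le> t \<Longrightarrow> N s w \<le> N t w"
  using uc by (simp add: uniformized_chain_def poisson_process_def)

lemma markov: "measure M {w \<in> space M. \<forall>i\<le>n. Z i w = xs i} = p0 (xs 0) * (\<Prod>i<n. Pi (xs i) (xs (Suc i)))"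
  using uc by (simp add: uniformized_chain_def markov_chain_def)

lemma poisson: "ts 0 = 0 \<Longrightarrow> (\<forall>i<k. ts i < ts (Suc i)) \<Longrightarrow>
   measure M {w \<in> space M. \<forall>i<k. N (ts (Suc i)) w - N (ts i) w = ns i}
   = (\<Prod>i<k. pois (ts (Suc i) - ts i) (ns i))"
  using uc by (simp add: uniformized_chain_def poisson_process_def pois_def)

lemma indep: "indep_set (sigma_sets (space M) {Z n -` A \<inter> space M | n A. True})
       (sigma_sets (space M) {N t -` A \<inter> space M | t A. 0 \<le> t})"
  using uc by (simp add: uniformized_chain_def)

lemma X_meas[measurable]: "ctmc Z N t \<in> measurable M (count_space UNIV)"
  unfolding ctmc_def[abs_def] by (rule measurable_compose_countable[OF Z_meas N_meas])

definition C :: "nat \<Rightarrow> (nat \<Rightarrow> 's) \<Rightarrow> 'w set" where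
  "C n xs = {w \<in> space M. \<forall>i\<le>n. Z i w = xs i}"

lemma C_meas[measurable]: "C n xs \<in> sets M"
  unfolding C_def by measurable

lemma past_union: "{w \<in> space M. \<Phi> (restrict (\<lambda>i. Z i w) {..n})}
   = (\<Union>xs\<in>{xs\<in>PiE {..n} (\<lambda>_. UNIV). \<Phi> xs}. C n xs)"
proof safe
  fix w assume w: "w \<in> space M" "\<Phi> (restrict (\<lambda>i. Z i w) {..n})"
  then show "w \<in> (\<Union>xs\<in>{xs\<in>PiE {..n} (\<lambda>_. UNIV). \<Phi> xs}. C n xs)"
    by (intro UN_I[of "restrict (\<lambda>i. Z i w) {..n}"]) (auto simp: C_def)
next
  fix w xs assume "xs \<in> PiE {..n} (\<lambda>_. UNIV)" "\<Phi> xs" "w \<in> C n xs"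
  moreover then have "restrict (\<lambda>i. Z i w) {..n} = xs"
    by (auto simp: C_def PiE_def extensional_def fun_eq_iff)
  ultimately show "\<Phi> (restrict (\<lambda>i. Z i w) {..n})" "w \<in> space M" by (auto simp: C_def)
qed

lemma fin_A: "finite {xs \<in> PiE {..n::nat} (\<lambda>_. UNIV::'s set). P xs}"
proof (rule finite_subset)
  show "finite (PiE {..n} (\<lambda>_. UNIV::'s set))" by (intro finite_PiE) auto
qed auto

lemma past_meas[measurable]: "{w \<in> space M. \<Phi> (restrict (\<lambda>i. Z i w) {..n})} \<in> sets M"
  unfolding past_union by (intro sets.finite_UN fin_A) (auto)

lemma past_pred[measurable]: "Measurable.pred M (\<lambda>w. \<Phi> (restrict (\<lambda>i. Z i w) {..n}))"
  unfolding pred_def using past_meas .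

lemma C_disj: "disjoint_family_on (C n) (PiE {..n} (\<lambda>_. UNIV))"
  unfolding disjoint_family_on_def C_def
proof safe
  fix xs ys w assume "xs \<in> PiE {..n} (\<lambda>_. UNIV)" "ys \<in> PiE {..n} (\<lambda>_. UNIV)" "xs \<noteq> ys"
    and "\<forall>i\<le>n. Z i w = xs i" "\<forall>i\<le>n. Z i w = ys i"
  then show "w \<in> {}" by (auto simp: PiE_def extensional_def fun_eq_iff) (metis not_le)
qed

lemma C_step: "prob (C n xs \<inter> {w\<in>space M. Z (Suc n) w = x}) = prob (C n xs) * Pi (xs n) x"
proof -
  have "C n xs \<inter> {w\<in>space M. Z (Suc n) w = x} = C (Suc n) (xs(Suc n := x))"
    by (auto simp: C_def le_Suc_eq)
  moreover have "(\<Prod>i<Suc n. Pi ((xs(Suc n := x)) i) ((xs(Suc n := x)) (Suc i)))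
       = (\<Prod>i<n. Pi (xs i) (xs (Suc i))) * Pi (xs n) x"
    by (simp add: prod.lessThan_Suc)
  ultimately show ?thesis by (simp add: C_def markov mult.assoc)
qed

lemma Z_one_step:
  "prob {w\<in>space M. \<Phi> (restrict (\<lambda>i. Z i w) {..n}) \<and> Z n w = y \<and> Z (Suc n) w = x}
   = prob {w\<in>space M. \<Phi> (restrict (\<lambda>i. Z i w) {..n}) \<and> Z n w = y} * Pi y x"
proof -
  let ?\<Psi> = "\<lambda>xs. \<Phi> xs \<and> xs n = y"
  let ?A = "{xs\<in>PiE {..n} (\<lambda>_. UNIV). ?\<Psi> xs}"
  have fA: "finite ?A" by (rule fin_A)
  have e1: "{w\<in>space M. \<Phi> (restrict (\<lambda>i. Z i w) {..n}) \<and> Z n w = y}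
      = (\<Union>xs\<in>?A. C n xs)"
    using past_union[of ?\<Psi> n] by simp
  have e2: "{w\<in>space M. \<Phi> (restrict (\<lambda>i. Z i w) {..n}) \<and> Z n w = y \<and> Z (Suc n) w = x}
      = (\<Union>xs\<in>?A. C n xs \<inter> {w\<in>space M. Z (Suc n) w = x})"
  proof -
    have "{w\<in>space M. \<Phi> (restrict (\<lambda>i. Z i w) {..n}) \<and> Z n w = y \<and> Z (Suc n) w = x}
      = {w\<in>space M. \<Phi> (restrict (\<lambda>i. Z i w) {..n}) \<and> Z n w = y} \<inter> {w\<in>space M. Z (Suc n) w = x}"
      by auto
    also have "\<dots> = (\<Union>xs\<in>?A. C n xs) \<inter> {w\<in>space M. Z (Suc n) w = x}" by (simp only: e1)
    also have "\<dots> = (\<Union>xs\<in>?A. C n xs \<inter> {w\<in>space M. Z (Suc n) w = x})" by (rule UN_extend_simps)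
    finally show ?thesis .
  qed
  have d: "disjoint_family_on (C n) ?A" using C_disj by (rule disjoint_family_on_mono[rotated]) auto
  have "prob (\<Union>xs\<in>?A. C n xs \<inter> {w\<in>space M. Z (Suc n) w = x})
      = (\<Sum>xs\<in>?A. prob (C n xs \<inter> {w\<in>space M. Z (Suc n) w = x}))"
  proof (intro finite_measure_finite_Union fA)
    show "disjoint_family_on (\<lambda>i. C n i \<inter> {w \<in> space M. Z (Suc n) w = x}) ?A"
      using d unfolding disjoint_family_on_def by blast
  qed auto
  also have "\<dots> = (\<Sum>xs\<in>?A. prob (C n xs) * Pi y x)"
    by (intro sum.cong refl) (simp add: C_step)
  also have "\<dots> = prob (\<Union>xs\<in>?A. C n xs) * Pi y x"
    by (subst finite_measure_finite_Union[OF fA _ d]) (auto simp: sum_distrib_right)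
  finally show ?thesis using e1 e2 by simp
qed

lemma Z_multi_step:
  "prob {w\<in>space M. \<Phi> (restrict (\<lambda>i. Z i w) {..n}) \<and> Z n w = y \<and> Z (n + e) w = x}
   = prob {w\<in>space M. \<Phi> (restrict (\<lambda>i. Z i w) {..n}) \<and> Z n w = y} * mpow Pi e y x"
proof (induction e arbitrary: x)
  case 0
  show ?case
  proof (cases "x = y")
    case False
    then have "{w\<in>space M. \<Phi> (restrict (\<lambda>i. Z i w) {..n}) \<and> Z n w = y \<and> Z (n + 0) w = x} = {}" by auto
    then have p0: "prob {w\<in>space M. \<Phi> (restrict (\<lambda>i. Z i w) {..n}) \<and> Z n w = y \<and> Z (n + 0) w = x} = 0"
      by (simp only: measure_empty)
    have m0: "mpow Pi 0 y x = 0" using False by simp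
    show ?thesis by (simp only: p0 m0 mult_zero_right)
  qed simp
next
  case (Suc e)
  let ?\<Phi>' = "\<lambda>zs. \<Phi> (restrict zs {..n}) \<and> zs n = y"
  let ?E = "\<lambda>z. {w\<in>space M. ?\<Phi>' (restrict (\<lambda>i. Z i w) {..n+e}) \<and> Z (n+e) w = z \<and> Z (Suc (n+e)) w = x}"
  have r: "restrict (restrict (\<lambda>i. Z i w) {..n+e}) {..n} = restrict (\<lambda>i. Z i w) {..n}" for w
    by (auto simp: fun_eq_iff)
  have eq: "{w\<in>space M. \<Phi> (restrict (\<lambda>i. Z i w) {..n}) \<and> Z n w = y \<and> Z (n + Suc e) w = x}
     = (\<Union>z. ?E z)"
    by (auto simp: r)
  have "prob (\<Union>z. ?E z) = (\<Sum>z\<in>UNIV. prob (?E z))"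
    by (intro finite_measure_finite_Union) (auto simp: disjoint_family_on_def)
  also have "\<dots> = (\<Sum>z\<in>UNIV. prob {w\<in>space M. \<Phi> (restrict (\<lambda>i. Z i w) {..n}) \<and> Z n w = y \<and> Z (n + e) w = z} * Pi z x)"
  proof (intro sum.cong refl)
    fix z
    have "prob (?E z) = prob {w\<in>space M. ?\<Phi>' (restrict (\<lambda>i. Z i w) {..n+e}) \<and> Z (n+e) w = z} * Pi z x"
      by (rule Z_one_step)
    also have "{w\<in>space M. ?\<Phi>' (restrict (\<lambda>i. Z i w) {..n+e}) \<and> Z (n+e) w = z}
       = {w\<in>space M. \<Phi> (restrict (\<lambda>i. Z i w) {..n}) \<and> Z n w = y \<and> Z (n + e) w = z}"
      by (auto simp: r)
    finally show "prob (?E z) = prob {w\<in>space M. \<Phi> (restrict (\<lambda>i. Z i w) {..n}) \<and> Z n w = y \<and> Z (n + e) w = z} * Pi z x" .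
  qed
  also have "\<dots> = prob {w\<in>space M. \<Phi> (restrict (\<lambda>i. Z i w) {..n}) \<and> Z n w = y} * mpow Pi (Suc e) y x"
    by (simp only: Suc mpow.simps sum_distrib_left mult.assoc)
  finally show ?case unfolding eq .
qed

end


lemma sort_seq:
  fixes A :: "real set"
  assumes "finite A" "A \<noteq> {}"
  shows "\<exists>k ts. ts ` {..k} = A \<and> (\<forall>i<k. ts i < ts (Suc i)) \<and> ts 0 = Min A \<and> ts k = Max A"
  using assms
proof (induction A rule: finite_linorder_max_induct)
  case empty then show ?case by simp
next
  case (insert b A)
  show ?case
  proof (cases "A = {}")
    case True
    then show ?thesis by (intro exI[of _ 0] exI[of _ "\<lambda>_. b"]) auto
  next
    case False
    then obtain k ts where k: "ts ` {..k} = A" "\<forall>i<k. ts i < ts (Suc i)" "ts 0 = Min A" "ts k = Max A"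
      using insert by blast
    have mx: "Max A < b" using insert False by auto
    have mn: "Min (insert b A) = Min A" using insert False
      by (metis Min_in Min_insert less_imp_le min.absorb2 min.commute)
    have mxb: "Max (insert b A) = b" using insert False by (auto intro!: Max_eqI)
    let ?ts = "ts(Suc k := b)"
    have "?ts ` {..Suc k} = insert b A"
    proof -
      have "{..Suc k} = insert (Suc k) {..k}" by auto
      then have "?ts ` {..Suc k} = insert b (?ts ` {..k})" by (simp only: image_insert fun_upd_same)
      also have "?ts ` {..k} = ts ` {..k}" by (intro image_cong) auto
      finally show ?thesis using k by simp
    qed
    moreover have "\<forall>i<Suc k. ?ts i < ?ts (Suc i)"
      using k mx by (auto simp: less_Suc_eq)
    ultimately show ?thesis using k mn mxb
      by (intro exI[of _ "Suc k"] exI[of _ ?ts]) auto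
  qed
qed

context uchain
begin

lemma ts_nonneg: "(ts::nat\<Rightarrow>real) 0 = 0 \<Longrightarrow> \<forall>i<k. ts i < ts (Suc i) \<Longrightarrow> i \<le> k \<Longrightarrow> 0 \<le> ts i"
proof (induction i)
  case (Suc i)
  then have "0 \<le> ts i" "ts i < ts (Suc i)" by auto
  then show ?case by linarith
qed simp

lemma N_event_empty:
  assumes "ts 0 = 0" "\<forall>i<k. ts i < ts (Suc i)" "\<not> (c 0 = 0 \<and> (\<forall>i<k. c i \<le> c (Suc i)))"
  shows "{w\<in>space M. \<forall>i\<le>k. N (ts i) w = c i} = {}"
proof (rule ccontr)
  assume "{w\<in>space M. \<forall>i\<le>k. N (ts i) w = c i} \<noteq> {}"
  then obtain w where w: "w \<in> space M" "\<forall>i\<le>k. N (ts i) w = c i" by auto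
  have "c 0 = 0" using w N0 assms(1) by (metis le0)
  moreover have "c i \<le> c (Suc i)" if "i < k" for i
  proof -
    have "0 \<le> ts i" using ts_nonneg[OF assms(1,2)] that by simp
    moreover have "ts i \<le> ts (Suc i)" using assms(2) that by (simp add: less_imp_le)
    ultimately have "N (ts i) w \<le> N (ts (Suc i)) w" by (rule Nmono[OF w(1)])
    then show ?thesis using w that by simp
  qed
  ultimately show False using assms(3) by auto
qed

lemma N_event_eq:
  assumes "ts 0 = 0" "\<forall>i<k. ts i < ts (Suc i)" "c 0 = 0" "\<forall>i<k. c i \<le> c (Suc i)"
  shows "{w\<in>space M. \<forall>i\<le>k. N (ts i) w = c i}
       = {w\<in>space M. \<forall>i<k. N (ts (Suc i)) w - N (ts i) w = c (Suc i) - c i}"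
proof safe
  fix w i assume "w \<in> space M" "\<forall>i\<le>k. N (ts i) w = c i" "i < k"
  then show "N (ts (Suc i)) w - N (ts i) w = c (Suc i) - c i" by simp
next
  fix w i assume w: "w \<in> space M" "\<forall>i<k. N (ts (Suc i)) w - N (ts i) w = c (Suc i) - c i" "i \<le> k"
  then show "N (ts i) w = c i"
  proof (induction i)
    case 0 then show ?case using N0 assms by simp
  next
    case (Suc i)
    then have ih: "N (ts i) w = c i" by simp
    have "0 \<le> ts i" using ts_nonneg[OF assms(1,2)] Suc by simp
    moreover have "ts i \<le> ts (Suc i)" using assms(2) Suc by (simp add: less_imp_le)
    ultimately have "N (ts i) w \<le> N (ts (Suc i)) w" by (rule Nmono[OF w(1)])
    moreover have "c i \<le> c (Suc i)" using assms(4) Suc by simp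
    ultimately show ?case using Suc(3)[rule_format, of i] Suc(4) ih by simp
  qed
qed

lemma N_step:
  assumes ts0: "ts 0 = 0" and inc: "\<forall>i<Suc k. ts i < ts (Suc i)"
  shows "prob {w\<in>space M. \<forall>i\<le>Suc k. N (ts i) w = c i}
     = prob {w\<in>space M. \<forall>i\<le>k. N (ts i) w = c i} *
       (if c k \<le> c (Suc k) then pois (ts (Suc k) - ts k) (c (Suc k) - c k) else 0)"
proof -
  have inc': "\<forall>i<k. ts i < ts (Suc i)" using inc by simp
  show ?thesis
  proof (cases "c 0 = 0 \<and> (\<forall>i<k. c i \<le> c (Suc i))")
    case True
    show ?thesis
    proof (cases "c k \<le> c (Suc k)")
      case True2: True
      have m2: "\<forall>i<Suc k. c i \<le> c (Suc i)" using True True2 by (auto simp: less_Suc_eq)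
      have "prob {w\<in>space M. \<forall>i\<le>Suc k. N (ts i) w = c i}
          = (\<Prod>i<Suc k. pois (ts (Suc i) - ts i) (c (Suc i) - c i))"
        using N_event_eq[OF ts0 inc _ m2] True poisson[OF ts0 inc] by simp
      also have "\<dots> = (\<Prod>i<k. pois (ts (Suc i) - ts i) (c (Suc i) - c i)) * pois (ts (Suc k) - ts k) (c (Suc k) - c k)"
        by simp
      also have "(\<Prod>i<k. pois (ts (Suc i) - ts i) (c (Suc i) - c i)) = prob {w\<in>space M. \<forall>i\<le>k. N (ts i) w = c i}"
        using N_event_eq[OF ts0 inc'] True poisson[OF ts0 inc'] by simp
      finally show ?thesis using True2 by simp
    next
      case False
      have e: "{w\<in>space M. \<forall>i\<le>Suc k. N (ts i) w = c i} = {}"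
        using False by (intro N_event_empty[OF ts0 inc]) auto
      show ?thesis unfolding e using False by simp
    qed
  next
    case False
    have e1: "{w\<in>space M. \<forall>i\<le>Suc k. N (ts i) w = c i} = {}"
      using False by (intro N_event_empty[OF ts0 inc]) auto
    have e2: "{w\<in>space M. \<forall>i\<le>k. N (ts i) w = c i} = {}"
      using False by (intro N_event_empty[OF ts0 inc'])
    show ?thesis unfolding e1 e2 by simp
  qed
qed

lemma N_lemma:
  assumes S: "finite S" "\<forall>v\<in>S. 0 \<le> v" "m \<in> S" "\<forall>v\<in>S. v \<le> m" and mt: "m < t"
  shows "prob {w\<in>space M. (\<forall>v\<in>S. N v w = g v) \<and> N t w = j}
       = prob {w\<in>space M. \<forall>v\<in>S. N v w = g v} * (if g m \<le> j then pois (t - m) (j - g m) else 0)"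
proof -
  let ?A = "insert 0 S"
  have m0: "0 \<le> m" using S by auto
  have "Min ?A = 0" using S by (intro Min_eqI) auto
  moreover have "Max ?A = m" using S m0 by (intro Max_eqI) auto
  ultimately obtain k ts where k: "ts ` {..k} = ?A" "\<forall>i<k. ts i < ts (Suc i)" "ts 0 = 0" "ts k = m"
    using sort_seq[of ?A] S by auto
  define ts' where "ts' = ts(Suc k := t)"
  define c where "c i = (if i \<le> k then (if ts i \<in> S then g (ts i) else 0) else j)" for i
  have ts'0: "ts' 0 = 0" using k by (simp add: ts'_def)
  have inc: "\<forall>i<Suc k. ts' i < ts' (Suc i)"
    using k mt by (auto simp: ts'_def less_Suc_eq)
  have ts'k: "\<And>i. i \<le> k \<Longrightarrow> ts' i = ts i" by (simp add: ts'_def)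
  have ev: "(\<forall>v\<in>S. N v w = g v) \<longleftrightarrow> (\<forall>i\<le>k. N (ts' i) w = c i)" if w: "w \<in> space M" for w
  proof
    assume a: "\<forall>v\<in>S. N v w = g v"
    show "\<forall>i\<le>k. N (ts' i) w = c i"
    proof safe
      fix i assume "i \<le> k"
      moreover then have "ts i \<in> ?A" using k by auto
      ultimately show "N (ts' i) w = c i" using a N0[OF w] by (auto simp: ts'k c_def)
    qed
  next
    assume a: "\<forall>i\<le>k. N (ts' i) w = c i"
    show "\<forall>v\<in>S. N v w = g v"
    proof
      fix v assume "v \<in> S"
      then obtain i where "i \<le> k" "v = ts i" using k by (metis atMost_iff imageE insertCI)
      then show "N v w = g v" using a \<open>v \<in> S\<close> by (auto simp: ts'k c_def)
    qed
  qed
  have e1: "{w\<in>space M. \<forall>v\<in>S. N v w = g v} = {w\<in>space M. \<forall>i\<le>k. N (ts' i) w = c i}"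
    using ev by auto
  have e2: "{w\<in>space M. (\<forall>v\<in>S. N v w = g v) \<and> N t w = j} = {w\<in>space M. \<forall>i\<le>Suc k. N (ts' i) w = c i}"
  proof -
    have "(\<forall>i\<le>Suc k. N (ts' i) w = c i) \<longleftrightarrow> (\<forall>i\<le>k. N (ts' i) w = c i) \<and> N t w = j" for w
      by (auto simp: le_Suc_eq c_def ts'_def)
    note h = this
    show ?thesis
    proof (rule set_eqI)
      fix w show "w \<in> {w\<in>space M. (\<forall>v\<in>S. N v w = g v) \<and> N t w = j} \<longleftrightarrow> w \<in> {w\<in>space M. \<forall>i\<le>Suc k. N (ts' i) w = c i}"
        using h[of w] ev[of w] by auto
    qed
  qed
  have ck: "c k = g m" "c (Suc k) = j" using k S by (auto simp: c_def)
  show ?thesis unfolding e1 e2 N_step[OF ts'0 inc] using ck k by (simp add: ts'_def)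
qed

end


lemma sig_Int:
  assumes "G \<subseteq> Pow \<Omega>" "a \<in> sigma_sets \<Omega> G" "b \<in> sigma_sets \<Omega> G"
  shows "a \<inter> b \<in> sigma_sets \<Omega> G"
proof -
  interpret sigma_algebra \<Omega> "sigma_sets \<Omega> G" using assms(1) by (rule sigma_algebra_sigma_sets)
  show ?thesis using assms(2,3) by (rule Int)
qed

context uchain
begin

abbreviation "ZG \<equiv> {Z n -` A \<inter> space M | n A. True}"
abbreviation "NG \<equiv> {N t -` A \<inter> space M | t A. 0 \<le> t}"

lemma ZG_Pow: "ZG \<subseteq> Pow (space M)" by auto
lemma NG_Pow: "NG \<subseteq> Pow (space M)" by auto

lemma Z_sig: "finite I \<Longrightarrow> {w\<in>space M. \<forall>i\<in>I. Z (a i) w = b i} \<in> sigma_sets (space M) ZG"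
proof (induction I rule: finite_induct)
  case empty
  then show ?case using sigma_sets_top by simp
next
  case (insert i I)
  have eq: "{w\<in>space M. \<forall>i\<in>insert i I. Z (a i) w = b i}
      = (Z (a i) -` {b i} \<inter> space M) \<inter> {w\<in>space M. \<forall>i\<in>I. Z (a i) w = b i}" by auto
  have b: "Z (a i) -` {b i} \<inter> space M \<in> sigma_sets (space M) ZG" by (rule sigma_sets.Basic) blast
  have ih: "{w\<in>space M. \<forall>i\<in>I. Z (a i) w = b i} \<in> sigma_sets (space M) ZG" using insert by simp
  show ?case unfolding eq by (rule sig_Int[OF ZG_Pow b ih])
qed

lemma N_sig: "finite I \<Longrightarrow> \<forall>i\<in>I. 0 \<le> a i \<Longrightarrow> {w\<in>space M. \<forall>i\<in>I. N (a i) w = b i} \<in> sigma_sets (space M) NG"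
proof (induction I rule: finite_induct)
  case empty
  then show ?case using sigma_sets_top by simp
next
  case (insert i I)
  have eq: "{w\<in>space M. \<forall>i\<in>insert i I. N (a i) w = b i}
      = (N (a i) -` {b i} \<inter> space M) \<inter> {w\<in>space M. \<forall>i\<in>I. N (a i) w = b i}" by auto
  have b: "N (a i) -` {b i} \<inter> space M \<in> sigma_sets (space M) NG"
    using insert by (intro sigma_sets.Basic) blast
  have ih: "{w\<in>space M. \<forall>i\<in>I. N (a i) w = b i} \<in> sigma_sets (space M) NG" using insert by simp
  show ?case unfolding eq by (rule sig_Int[OF NG_Pow b ih])
qed

lemma indep_prob: "A \<in> sigma_sets (space M) ZG \<Longrightarrow> B \<in> sigma_sets (space M) NG \<Longrightarrow>
   prob (B \<inter> A) = prob B * prob A"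
  using indep_setD[OF indep, of A B] by (simp add: Int_commute mult.commute)

lemma MS_aux:
  assumes S: "finite S" "\<forall>v\<in>S. 0 \<le> v" "m \<in> S" "\<forall>v\<in>S. v \<le> m" and mt: "m < t"
  shows "prob {w\<in>space M. (\<forall>v\<in>S. ctmc Z N v w = f v) \<and> N m w = j \<and> N t w = j + e \<and> Z (j + e) w = x}
       = prob {w\<in>space M. (\<forall>v\<in>S. ctmc Z N v w = f v) \<and> N m w = j} * (pois (t - m) e * mpow Pi e (f m) x)"
proof -
  let ?G = "{g \<in> PiE S (\<lambda>_. {..j}). g m = j}"
  have fG: "finite ?G" by (rule finite_subset[of _ "PiE S (\<lambda>_. {..j})"]) (auto intro!: finite_PiE S)
  let ?NA = "\<lambda>g. {w\<in>space M. \<forall>v\<in>S. N v w = g v}"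
  let ?ZA = "\<lambda>g. {w\<in>space M. \<forall>v\<in>S. Z (g v) w = f v}"
  let ?NT = "{w\<in>space M. N t w = j + e}"
  let ?ZT = "{w\<in>space M. Z (j + e) w = x}"
  have t0: "0 \<le> t" using S mt by force
  have NAs: "?NA g \<in> sigma_sets (space M) NG" for g using N_sig[of S id g] S by simp
  have NATs: "?NA g \<inter> ?NT \<in> sigma_sets (space M) NG" for g
  proof -
    have "?NA g \<inter> ?NT = {w\<in>space M. \<forall>v\<in>insert t S. N (id v) w = (g(t := j + e)) v}"
      using mt S by auto
    then show ?thesis using N_sig[of "insert t S" id "g(t := j + e)"] S t0 by simp
  qed
  have ZAs: "?ZA g \<in> sigma_sets (space M) ZG" for g using Z_sig[of S g f] S by simp
  have ZATs: "?ZA g \<inter> ?ZT \<in> sigma_sets (space M) ZG" for g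
  proof -
    have "?ZT = {w\<in>space M. \<forall>i\<in>{0::nat}. Z ((\<lambda>_. j + e) i) w = (\<lambda>_. x) i}" by simp
    then have "?ZT \<in> sigma_sets (space M) ZG" using Z_sig[of "{0::nat}" "\<lambda>_. j + e" "\<lambda>_. x"] by simp
    then show ?thesis by (rule sig_Int[OF ZG_Pow ZAs[of g]])
  qed
  have NAm: "?NA g \<in> sets M" for g using S by measurable
  have ZAm: "?ZA g \<in> sets M" for g using S by measurable
  have NTm: "?NT \<in> sets M"
  proof -
    have "?NT = N t -` {j + e} \<inter> space M" by auto
    then show ?thesis using measurable_sets[OF N_meas, of "{j+e}" t] by simp
  qed
  have ZTm: "?ZT \<in> sets M"
  proof -
    have "?ZT = Z (j + e) -` {x} \<inter> space M" by auto
    then show ?thesis using measurable_sets[OF Z_meas, of "{x}" "j+e"] by simp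
  qed
  have key: "prob (?NA g \<inter> ?ZA g \<inter> (?NT \<inter> ?ZT)) = prob (?NA g \<inter> ?ZA g) * (pois (t - m) e * mpow Pi e (f m) x)"
    if g: "g \<in> ?G" for g
  proof -
    have "?NA g \<inter> ?ZA g \<inter> (?NT \<inter> ?ZT) = (?NA g \<inter> ?NT) \<inter> (?ZA g \<inter> ?ZT)" by blast
    then have "prob (?NA g \<inter> ?ZA g \<inter> (?NT \<inter> ?ZT)) = prob (?NA g \<inter> ?NT) * prob (?ZA g \<inter> ?ZT)"
      using indep_prob[OF ZATs NATs] by simp
    also have "prob (?NA g \<inter> ?NT) = prob (?NA g) * pois (t - m) e"
    proof -
      have "?NA g \<inter> ?NT = {w\<in>space M. (\<forall>v\<in>S. N v w = g v) \<and> N t w = j + e}" by auto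
      then show ?thesis using N_lemma[OF S mt, of g "j + e"] g by simp
    qed
    also have "prob (?ZA g \<inter> ?ZT) = prob (?ZA g) * mpow Pi e (f m) x"
    proof -
      let ?\<Phi> = "\<lambda>zs. \<forall>v\<in>S. zs (g v) = f v"
      have gl: "v \<in> S \<Longrightarrow> g v \<le> j" for v using g by (auto simp: PiE_def Pi_def)
      have "?ZA g \<inter> ?ZT = {w\<in>space M. ?\<Phi> (restrict (\<lambda>i. Z i w) {..j}) \<and> Z j w = f m \<and> Z (j + e) w = x}"
        using g gl S(3) by auto
      moreover have "?ZA g = {w\<in>space M. ?\<Phi> (restrict (\<lambda>i. Z i w) {..j}) \<and> Z j w = f m}"
        using g gl S(3) by auto
      ultimately show ?thesis using Z_multi_step[of ?\<Phi> j "f m" e x] by simp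
    qed
    also have "prob (?NA g) * pois (t - m) e * (prob (?ZA g) * mpow Pi e (f m) x)
       = (prob (?NA g) * prob (?ZA g)) * (pois (t - m) e * mpow Pi e (f m) x)" by simp
    also have "prob (?NA g) * prob (?ZA g) = prob (?NA g \<inter> ?ZA g)"
      using indep_prob[OF ZAs NAs] by simp
    finally show ?thesis .
  qed
  have Nle: "N v w \<le> N m w" if "w \<in> space M" "v \<in> S" for v w
    using Nmono[OF that(1)] S that by auto
  have Ej: "{w\<in>space M. (\<forall>v\<in>S. ctmc Z N v w = f v) \<and> N m w = j} = (\<Union>g\<in>?G. ?NA g \<inter> ?ZA g)"
  proof (intro equalityI subsetI)
    fix w assume "w \<in> {w\<in>space M. (\<forall>v\<in>S. ctmc Z N v w = f v) \<and> N m w = j}"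
    then have w: "w \<in> space M" "\<forall>v\<in>S. ctmc Z N v w = f v" "N m w = j" by auto
    show "w \<in> (\<Union>g\<in>?G. ?NA g \<inter> ?ZA g)"
    proof (rule UN_I[of "restrict (\<lambda>v. N v w) S"])
      show "restrict (\<lambda>v. N v w) S \<in> ?G" using w Nle S(3) by auto
      show "w \<in> ?NA (restrict (\<lambda>v. N v w) S) \<inter> ?ZA (restrict (\<lambda>v. N v w) S)"
        using w by (auto simp: ctmc_def)
    qed
  next
    fix w assume "w \<in> (\<Union>g\<in>?G. ?NA g \<inter> ?ZA g)"
    then obtain g where g: "g \<in> ?G" "w \<in> ?NA g" "w \<in> ?ZA g" by blast
    then show "w \<in> {w\<in>space M. (\<forall>v\<in>S. ctmc Z N v w = f v) \<and> N m w = j}"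
      using S(3) by (auto simp: ctmc_def)
  qed
  have dis: "disjoint_family_on (\<lambda>g. ?NA g \<inter> ?ZA g) ?G"
    unfolding disjoint_family_on_def
  proof (intro ballI impI)
    fix g g' assume "g \<in> ?G" "g' \<in> ?G" "g \<noteq> g'"
    then obtain v where v: "v \<in> S" "g v \<noteq> g' v"
      by (auto simp: PiE_def extensional_def fun_eq_iff) (metis)
    then show "(?NA g \<inter> ?ZA g) \<inter> (?NA g' \<inter> ?ZA g') = {}" by auto
  qed
  have Fe: "{w\<in>space M. (\<forall>v\<in>S. ctmc Z N v w = f v) \<and> N m w = j \<and> N t w = j + e \<and> Z (j + e) w = x}
      = (\<Union>g\<in>?G. ?NA g \<inter> ?ZA g \<inter> (?NT \<inter> ?ZT))"
  proof -
    have "{w\<in>space M. (\<forall>v\<in>S. ctmc Z N v w = f v) \<and> N m w = j \<and> N t w = j + e \<and> Z (j + e) w = x}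
       = {w\<in>space M. (\<forall>v\<in>S. ctmc Z N v w = f v) \<and> N m w = j} \<inter> (?NT \<inter> ?ZT)" by auto
    also have "\<dots> = (\<Union>g\<in>?G. ?NA g \<inter> ?ZA g \<inter> (?NT \<inter> ?ZT))" unfolding Ej by (rule UN_extend_simps)
    finally show ?thesis .
  qed
  have "prob (\<Union>g\<in>?G. ?NA g \<inter> ?ZA g \<inter> (?NT \<inter> ?ZT)) = (\<Sum>g\<in>?G. prob (?NA g \<inter> ?ZA g \<inter> (?NT \<inter> ?ZT)))"
  proof (intro finite_measure_finite_Union fG)
    show "disjoint_family_on (\<lambda>g. ?NA g \<inter> ?ZA g \<inter> (?NT \<inter> ?ZT)) ?G"
      using dis unfolding disjoint_family_on_def by blast
    show "(\<lambda>g. ?NA g \<inter> ?ZA g \<inter> (?NT \<inter> ?ZT)) ` ?G \<subseteq> sets M"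
      using NAm ZAm NTm ZTm by auto
  qed
  also have "\<dots> = (\<Sum>g\<in>?G. prob (?NA g \<inter> ?ZA g) * (pois (t - m) e * mpow Pi e (f m) x))"
    by (intro sum.cong refl key)
  also have "\<dots> = prob (\<Union>g\<in>?G. ?NA g \<inter> ?ZA g) * (pois (t - m) e * mpow Pi e (f m) x)"
    by (subst finite_measure_finite_Union[OF fG _ dis]) (use NAm ZAm in \<open>auto simp: sum_distrib_right\<close>)
  finally show ?thesis unfolding Fe Ej .
qed

lemma MS:
  assumes S: "finite S" "\<forall>v\<in>S. 0 \<le> v" "m \<in> S" "\<forall>v\<in>S. v \<le> m" and mt: "m \<le> t"
  shows "prob {w\<in>space M. (\<forall>v\<in>S. ctmc Z N v w = f v) \<and> ctmc Z N t w = x}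
       = prob {w\<in>space M. \<forall>v\<in>S. ctmc Z N v w = f v} * Kt Pi (t - m) (f m) x"
proof (cases "m = t")
  case True
  show ?thesis
  proof (cases "f m = x")
    case True2: True
    have "{w\<in>space M. (\<forall>v\<in>S. ctmc Z N v w = f v) \<and> ctmc Z N t w = x} = {w\<in>space M. \<forall>v\<in>S. ctmc Z N v w = f v}"
      using True True2 S(3) by auto
    then show ?thesis using True True2 Kt_zero[OF st] by simp
  next
    case False
    have e: "{w\<in>space M. (\<forall>v\<in>S. ctmc Z N v w = f v) \<and> ctmc Z N t w = x} = {}"
      using True False S(3) by auto
    show ?thesis unfolding e using False True Kt_zero[OF st] by simp
  qed
next
  case False
  then have mt': "m < t" using mt by simp
  have m0: "0 \<le> m" using S by auto
  let ?K = "Kt Pi (t - m) (f m) x"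
  let ?E = "{w\<in>space M. \<forall>v\<in>S. ctmc Z N v w = f v}"
  let ?Ej = "\<lambda>j. {w\<in>space M. (\<forall>v\<in>S. ctmc Z N v w = f v) \<and> N m w = j}"
  let ?EX = "{w\<in>space M. (\<forall>v\<in>S. ctmc Z N v w = f v) \<and> ctmc Z N t w = x}"
  let ?EXj = "\<lambda>j. {w\<in>space M. (\<forall>v\<in>S. ctmc Z N v w = f v) \<and> N m w = j \<and> ctmc Z N t w = x}"
  let ?F = "\<lambda>j e. {w\<in>space M. (\<forall>v\<in>S. ctmc Z N v w = f v) \<and> N m w = j \<and> N t w = j + e \<and> Z (j + e) w = x}"
  have mEj: "?Ej j \<in> sets M" for j using S by measurable
  have mEXj: "?EXj j \<in> sets M" for j using S by measurable
  have mF: "?F j e \<in> sets M" for j e using S by measurable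
  have s1: "(\<lambda>j. prob (?Ej j)) sums prob ?E"
  proof -
    have "?E = (\<Union>j. ?Ej j)" by auto
    moreover have "(\<lambda>j. prob (?Ej j)) sums prob (\<Union>j. ?Ej j)"
      by (intro finite_measure_UNION) (auto simp: disjoint_family_on_def mEj)
    ultimately show ?thesis by simp
  qed
  have s2: "(\<lambda>j. prob (?EXj j)) sums prob ?EX"
  proof -
    have "?EX = (\<Union>j. ?EXj j)" by auto
    moreover have "(\<lambda>j. prob (?EXj j)) sums prob (\<Union>j. ?EXj j)"
      by (intro finite_measure_UNION) (auto simp: disjoint_family_on_def mEXj)
    ultimately show ?thesis by simp
  qed
  have s3: "prob (?EXj j) = prob (?Ej j) * ?K" for j
  proof -
    have "?EXj j = (\<Union>e. ?F j e)"
    proof (intro equalityI subsetI)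
      fix w assume "w \<in> ?EXj j"
      then have w: "w \<in> space M" "\<forall>v\<in>S. ctmc Z N v w = f v" "N m w = j" "ctmc Z N t w = x" by auto
      have "j \<le> N t w" using Nmono[OF w(1) m0 mt] w by simp
      then have "w \<in> ?F j (N t w - j)" using w by (auto simp: ctmc_def)
      then show "w \<in> (\<Union>e. ?F j e)" by blast
    qed (auto simp: ctmc_def)
    moreover have "(\<lambda>e. prob (?F j e)) sums prob (\<Union>e. ?F j e)"
      by (intro finite_measure_UNION) (auto simp: disjoint_family_on_def mF)
    ultimately have a: "(\<lambda>e. prob (?F j e)) sums prob (?EXj j)" by simp
    have "(\<lambda>e. prob (?Ej j) * (pois (t - m) e * mpow Pi e (f m) x)) sums (prob (?Ej j) * ?K)"
      using mt by (intro sums_mult Kt_sums[OF st]) simp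
    moreover have "prob (?F j e) = prob (?Ej j) * (pois (t - m) e * mpow Pi e (f m) x)" for e
      by (rule MS_aux[OF S mt'])
    ultimately have "(\<lambda>e. prob (?F j e)) sums (prob (?Ej j) * ?K)" by simp
    then show ?thesis using a sums_unique2 by blast
  qed
  have "(\<lambda>j. prob (?Ej j) * ?K) sums (prob ?E * ?K)" by (intro sums_mult2 s1)
  then have "(\<lambda>j. prob (?EXj j)) sums (prob ?E * ?K)" by (simp add: s3)
  then show ?thesis using s2 sums_unique2 by blast
qed

end


context uchain
begin

definition Ev :: "real set \<Rightarrow> (real \<Rightarrow> 's) \<Rightarrow> 'w set" where
  "Ev S f = {w\<in>space M. \<forall>v\<in>S. ctmc Z N v w = f v}"

lemma Ev_meas[measurable]: "finite S \<Longrightarrow> Ev S f \<in> sets M"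
  unfolding Ev_def by measurable

lemma MS':
  assumes S: "finite S" "\<forall>v\<in>S. 0 \<le> v" "m \<in> S" "\<forall>v\<in>S. v \<le> m" and mt: "m \<le> t"
  shows "prob (Ev (insert t S) f) = prob (Ev S f) * Kt Pi (t - m) (f m) (f t)"
proof -
  have "Ev (insert t S) f = {w\<in>space M. (\<forall>v\<in>S. ctmc Z N v w = f v) \<and> ctmc Z N t w = f t}"
    by (auto simp: Ev_def)
  then show ?thesis using MS[OF S mt, of f "f t"] by (simp add: Ev_def)
qed

lemma G:
  assumes b: "0 \<le> b" and V: "finite V" "\<forall>v\<in>V. b < v"
  shows "\<exists>c. \<forall>W. finite W \<longrightarrow> (\<forall>v\<in>W. 0 \<le> v \<and> v \<le> b) \<longrightarrow> b \<in> W \<longrightarrow>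
            prob (Ev (W \<union> V) f) = prob (Ev W f) * c"
  using V
proof (induction V rule: finite_linorder_max_induct)
  case empty
  then show ?case by (intro exI[of _ 1]) simp
next
  case (insert m V')
  then obtain c' where c': "\<And>W. finite W \<Longrightarrow> (\<forall>v\<in>W. 0 \<le> v \<and> v \<le> b) \<Longrightarrow> b \<in> W \<Longrightarrow>
            prob (Ev (W \<union> V') f) = prob (Ev W f) * c'" by auto
  let ?m' = "Max (insert b V')"
  have fin: "finite (insert b V')" using insert by simp
  have m'in: "?m' \<in> insert b V'" using Max_in[OF fin] by simp
  have m'ge: "v \<le> ?m'" if "v \<in> insert b V'" for v using Max_ge[OF fin that] .
  have m'le: "?m' \<le> m" using m'in insert by auto
  show ?case
  proof (intro exI[of _ "c' * Kt Pi (m - ?m') (f ?m') (f m)"] allI impI)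
    fix W assume W: "finite W" "\<forall>v\<in>W. 0 \<le> v \<and> v \<le> b" "b \<in> W"
    let ?S = "W \<union> V'"
    have S: "finite ?S" "\<forall>v\<in>?S. 0 \<le> v" "?m' \<in> ?S" "\<forall>v\<in>?S. v \<le> ?m'"
    proof -
      show "finite ?S" using W insert by simp
      show "\<forall>v\<in>?S. 0 \<le> v" using W insert b by force
      show "?m' \<in> ?S" using m'in W by auto
      show "\<forall>v\<in>?S. v \<le> ?m'"
      proof
        fix v assume "v \<in> ?S"
        then show "v \<le> ?m'"
        proof
          assume "v \<in> W" then have "v \<le> b" using W by auto
          also have "b \<le> ?m'" by (rule m'ge) simp
          finally show ?thesis .
        qed (auto intro: m'ge)
      qed
    qed
    have "W \<union> insert m V' = insert m ?S" by auto
    then have "prob (Ev (W \<union> insert m V') f) = prob (Ev ?S f) * Kt Pi (m - ?m') (f ?m') (f m)"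
      using MS'[OF S m'le] by simp
    also have "prob (Ev ?S f) = prob (Ev W f) * c'" using c' W by simp
    finally show "prob (Ev (W \<union> insert m V') f) = prob (Ev W f) * (c' * Kt Pi (m - ?m') (f ?m') (f m))"
      by simp
  qed
qed

lemma KM_basic:
  assumes ab: "0 \<le> a" "a < b" and V: "finite V" "\<forall>v\<in>V. b \<le> v"
  shows "prob (Ev V y \<inter> {w\<in>space M. ctmc Z N a w = z \<and> ctmc Z N b w = x}) * prob {w\<in>space M. ctmc Z N b w = x}
       = prob {w\<in>space M. ctmc Z N a w = z \<and> ctmc Z N b w = x} * prob (Ev V y \<inter> {w\<in>space M. ctmc Z N b w = x})"
proof (cases "b \<in> V \<and> y b \<noteq> x")
  case True
  then have "Ev V y \<inter> {w\<in>space M. ctmc Z N a w = z \<and> ctmc Z N b w = x} = {}"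
    "Ev V y \<inter> {w\<in>space M. ctmc Z N b w = x} = {}" by (auto simp: Ev_def)
  then show ?thesis by simp
next
  case False
  let ?V = "V - {b}"
  let ?f = "y(a := z, b := x)"
  have b0: "0 \<le> b" using ab by simp
  have V': "finite ?V" "\<forall>v\<in>?V. b < v" using V by force+
  obtain c where c: "\<And>W. finite W \<Longrightarrow> (\<forall>v\<in>W. 0 \<le> v \<and> v \<le> b) \<Longrightarrow> b \<in> W \<Longrightarrow>
            prob (Ev (W \<union> ?V) ?f) = prob (Ev W ?f) * c" using G[OF b0 V', of ?f] by blast
  have aV: "a \<notin> V" using V ab by force
  have fa: "?f a = z" "?f b = x" using ab by auto
  have fv: "v \<in> ?V \<Longrightarrow> ?f v = y v" for v using aV by auto
  have e1: "Ev V y \<inter> {w\<in>space M. ctmc Z N a w = z \<and> ctmc Z N b w = x} = Ev ({a, b} \<union> ?V) ?f"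
    using False fa fv by (auto simp: Ev_def)
  have e2: "Ev V y \<inter> {w\<in>space M. ctmc Z N b w = x} = Ev ({b} \<union> ?V) ?f"
    using False fa fv by (auto simp: Ev_def)
  have e3: "{w\<in>space M. ctmc Z N a w = z \<and> ctmc Z N b w = x} = Ev {a, b} ?f"
    using fa by (auto simp: Ev_def)
  have e4: "{w\<in>space M. ctmc Z N b w = x} = Ev {b} ?f"
    using fa by (auto simp: Ev_def)
  have p1: "prob (Ev ({a, b} \<union> ?V) ?f) = prob (Ev {a, b} ?f) * c" using c[of "{a, b}"] ab by simp
  have p2: "prob (Ev ({b} \<union> ?V) ?f) = prob (Ev {b} ?f) * c" using c[of "{b}"] ab by simp
  show ?thesis unfolding e1 e2 unfolding e3 e4 p1 p2 by simp
qed

definition Cyl :: "real \<Rightarrow> real \<Rightarrow> 'w set set" where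
  "Cyl b T = insert {} {Ev V y | V y. finite V \<and> V \<subseteq> {b..T}}"

lemma Cyl_Pow: "Cyl b T \<subseteq> Pow (space M)"
  by (auto simp: Cyl_def Ev_def)

lemma Cyl_sets: "Cyl b T \<subseteq> sets M"
  by (auto simp: Cyl_def)

lemma Cyl_Int_stable: "Int_stable (Cyl b T)"
  unfolding Int_stable_def
proof (intro ballI)
  fix A B assume A: "A \<in> Cyl b T" and B: "B \<in> Cyl b T"
  show "A \<inter> B \<in> Cyl b T"
  proof (cases "A = {} \<or> B = {}")
    case True then show ?thesis by (auto simp: Cyl_def)
  next
    case False
    then obtain V1 y1 V2 y2 where 1: "A = Ev V1 y1" "finite V1" "V1 \<subseteq> {b..T}"
      and 2: "B = Ev V2 y2" "finite V2" "V2 \<subseteq> {b..T}" using A B by (auto simp: Cyl_def)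
    show ?thesis
    proof (cases "\<exists>v\<in>V1 \<inter> V2. y1 v \<noteq> y2 v")
      case True
      then have "A \<inter> B = {}" using 1 2 by (auto simp: Ev_def)
      then show ?thesis by (simp add: Cyl_def)
    next
      case False
      then have "A \<inter> B = Ev (V1 \<union> V2) (\<lambda>v. if v \<in> V1 then y1 v else y2 v)"
        using 1 2 by (auto simp: Ev_def)
      then show ?thesis using 1 2 unfolding Cyl_def by blast
    qed
  qed
qed

lemma Cyl_sigma_sets: "sigma_sets (space M) (Cyl b T) \<subseteq> sets M"
  using Cyl_sets by (rule sets.sigma_sets_subset)

lemma KM_all:
  assumes ab: "0 \<le> a" "a < b" and A: "A \<in> sigma_sets (space M) (Cyl b T)"
  shows "prob (A \<inter> {w\<in>space M. ctmc Z N a w = z \<and> ctmc Z N b w = x}) * prob {w\<in>space M. ctmc Z N b w = x}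
       = prob {w\<in>space M. ctmc Z N a w = z \<and> ctmc Z N b w = x} * prob (A \<inter> {w\<in>space M. ctmc Z N b w = x})"
  using Cyl_Int_stable Cyl_Pow A
proof (induction A rule: sigma_sets_induct_disjoint)
  case (basic A)
  then show ?case
  proof (cases "A = {}")
    case False
    then obtain V y where V: "A = Ev V y" "finite V" "V \<subseteq> {b..T}" using basic by (auto simp: Cyl_def)
    have Vb: "\<forall>v\<in>V. b \<le> v" using V by auto
    show ?thesis using KM_basic[OF ab V(2) Vb, of y z x] V(1) by simp
  qed simp
next
  case empty
  then show ?case by simp
next
  case (compl A)
  let ?C1 = "{w\<in>space M. ctmc Z N a w = z \<and> ctmc Z N b w = x}"
  let ?C2 = "{w\<in>space M. ctmc Z N b w = x}"
  have Am: "A \<in> sets M" using compl Cyl_sigma_sets by auto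
  have m1: "?C1 \<in> sets M" and m2: "?C2 \<in> sets M" by measurable
  have d1: "prob ((space M - A) \<inter> ?C1) = prob ?C1 - prob (A \<inter> ?C1)"
  proof -
    have "(space M - A) \<inter> ?C1 = ?C1 - (A \<inter> ?C1)" by auto
    moreover have "prob (?C1 - A \<inter> ?C1) = prob ?C1 - prob (A \<inter> ?C1)"
      by (rule finite_measure_Diff[OF m1]) (use Am m1 in auto)
    ultimately show ?thesis by simp
  qed
  have d2: "prob ((space M - A) \<inter> ?C2) = prob ?C2 - prob (A \<inter> ?C2)"
  proof -
    have "(space M - A) \<inter> ?C2 = ?C2 - (A \<inter> ?C2)" by auto
    moreover have "prob (?C2 - A \<inter> ?C2) = prob ?C2 - prob (A \<inter> ?C2)"
      by (rule finite_measure_Diff[OF m2]) (use Am m2 in auto)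
    ultimately show ?thesis by simp
  qed
  show ?case unfolding d1 d2 using compl.IH by (simp add: right_diff_distrib left_diff_distrib mult.commute)
next
  case (union A)
  let ?C1 = "{w\<in>space M. ctmc Z N a w = z \<and> ctmc Z N b w = x}"
  let ?C2 = "{w\<in>space M. ctmc Z N b w = x}"
  have Am: "A i \<in> sets M" for i using union(2) Cyl_sigma_sets[of b T] by blast
  have m1: "?C1 \<in> sets M" and m2: "?C2 \<in> sets M" by measurable
  have s1: "(\<lambda>i. prob (A i \<inter> ?C1)) sums prob ((\<Union>i. A i) \<inter> ?C1)"
  proof -
    have "(\<lambda>i. prob (A i \<inter> ?C1)) sums prob (\<Union>i. A i \<inter> ?C1)"
      using union(1) Am m1 by (intro finite_measure_UNION) (auto simp: disjoint_family_on_def)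
    moreover have "(\<Union>i. A i \<inter> ?C1) = (\<Union>i. A i) \<inter> ?C1" by auto
    ultimately show ?thesis by simp
  qed
  have s2: "(\<lambda>i. prob (A i \<inter> ?C2)) sums prob ((\<Union>i. A i) \<inter> ?C2)"
  proof -
    have "(\<lambda>i. prob (A i \<inter> ?C2)) sums prob (\<Union>i. A i \<inter> ?C2)"
      using union(1) Am m2 by (intro finite_measure_UNION) (auto simp: disjoint_family_on_def)
    moreover have "(\<Union>i. A i \<inter> ?C2) = (\<Union>i. A i) \<inter> ?C2" by auto
    ultimately show ?thesis by simp
  qed
  have "(\<lambda>i. prob (A i \<inter> ?C1) * prob ?C2) sums (prob ((\<Union>i. A i) \<inter> ?C1) * prob ?C2)"
    by (intro sums_mult2 s1)
  moreover have "(\<lambda>i. prob ?C1 * prob (A i \<inter> ?C2)) sums (prob ?C1 * prob ((\<Union>i. A i) \<inter> ?C2))"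
    by (intro sums_mult s2)
  moreover have "(\<lambda>i. prob (A i \<inter> ?C1) * prob ?C2) = (\<lambda>i. prob ?C1 * prob (A i \<inter> ?C2))"
    using union.IH by auto
  ultimately have "(\<lambda>i. prob ?C1 * prob (A i \<inter> ?C2)) sums (prob ((\<Union>i. A i) \<inter> ?C1) * prob ?C2)"
    "(\<lambda>i. prob ?C1 * prob (A i \<inter> ?C2)) sums (prob ?C1 * prob ((\<Union>i. A i) \<inter> ?C2))" by simp_all
  then show ?case by (rule sums_unique2)
qed

end


context uchain
begin

abbreviation "Gen T s \<equiv> {ctmc Z N (T - u) -` A \<inter> space M | u A. 0 \<le> u \<and> u \<le> s}"

lemma Gen_Pow: "Gen T s \<subseteq> Pow (space M)" by auto

lemma sets_F: "sets (rev_filtration M (ctmc Z N) T s) = sigma_sets (space M) (Gen T s)"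
  unfolding rev_filtration_def by (rule sets_measure_of[OF Gen_Pow])

lemma space_F: "space (rev_filtration M (ctmc Z N) T s) = space M"
  unfolding rev_filtration_def by (rule space_measure_of[OF Gen_Pow])

lemma Gen_sets: "Gen T s \<subseteq> sets M"
proof
  fix B assume "B \<in> Gen T s"
  then obtain u A where "B = ctmc Z N (T - u) -` A \<inter> space M" by blast
  then show "B \<in> sets M" using measurable_sets[OF X_meas, of A "T - u"] by simp
qed

lemma F_subalg: "subalgebra M (rev_filtration M (ctmc Z N) T s)"
  unfolding subalgebra_def sets_F space_F using sets.sigma_sets_subset[OF Gen_sets] by simp

lemma F_mono: "s \<le> u \<Longrightarrow> sets (rev_filtration M (ctmc Z N) T s) \<subseteq> sets (rev_filtration M (ctmc Z N) T u)"
proof -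
  assume su: "s \<le> u"
  have "Gen T s \<subseteq> Gen T u"
  proof
    fix B assume "B \<in> Gen T s"
    then obtain v A where "B = ctmc Z N (T - v) -` A \<inter> space M" "0 \<le> v" "v \<le> s" by blast
    then have "B = ctmc Z N (T - v) -` A \<inter> space M \<and> 0 \<le> v \<and> v \<le> u" using su by auto
    then show "B \<in> Gen T u" by blast
  qed
  then show ?thesis unfolding sets_F by (rule sigma_sets_mono')
qed

lemma X_Fmeas: "0 \<le> s \<Longrightarrow> ctmc Z N (T - s) \<in> measurable (rev_filtration M (ctmc Z N) T s) (count_space UNIV)"
proof -
  assume s0: "0 \<le> s"
  have "ctmc Z N (T - s) -` {a} \<inter> space M \<in> sigma_sets (space M) (Gen T s)" for a
  proof (rule sigma_sets.Basic)
    have "ctmc Z N (T - s) -` {a} \<inter> space M = ctmc Z N (T - s) -` {a} \<inter> space M \<and> 0 \<le> s \<and> s \<le> s"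
      using s0 by simp
    then show "ctmc Z N (T - s) -` {a} \<inter> space M \<in> Gen T s" by blast
  qed
  then show ?thesis unfolding measurable_count_space_eq2_countable space_F sets_F by simp
qed

lemma Gen_Cyl: "0 \<le> s \<Longrightarrow> Gen T s \<subseteq> sigma_sets (space M) (Cyl (T - s) T)"
proof
  fix B assume "B \<in> Gen T s"
  then obtain u A where B: "B = ctmc Z N (T - u) -` A \<inter> space M" "0 \<le> u" "u \<le> s" by auto
  have eq: "B = \<Union> ((\<lambda>y. Ev {T - u} (\<lambda>_. y)) ` A)" using B by (auto simp: Ev_def)
  have cy: "Ev {T - u} (\<lambda>_. y) \<in> Cyl (T - s) T" for y
    using B unfolding Cyl_def by (intro insertI2 CollectI exI[of _ "{T - u}"] exI[of _ "\<lambda>_. y"]) auto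
  have cnt: "countable ((\<lambda>y. Ev {T - u} (\<lambda>_. y)) ` A)"
    by (intro countable_image countable_finite) simp
  show "B \<in> sigma_sets (space M) (Cyl (T - s) T)"
    unfolding eq
  proof (rule sigma_sets_UNION[OF cnt])
    fix b assume "b \<in> (\<lambda>y. Ev {T - u} (\<lambda>_. y)) ` A"
    then show "b \<in> sigma_sets (space M) (Cyl (T - s) T)" using cy by (auto intro: sigma_sets.Basic)
  qed
qed

lemma set_integral_X:
  fixes h :: "'s \<Rightarrow> real"
  assumes A: "A \<in> sets M"
  shows "(\<integral>w\<in>A. h (ctmc Z N t w) \<partial>M) = (\<Sum>z\<in>UNIV. h z * prob (A \<inter> {w\<in>space M. ctmc Z N t w = z}))"
proof -
  have m: "A \<inter> {w\<in>space M. ctmc Z N t w = z} \<in> sets M" for z using A by measurable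
  have pt: "indicator A w * h (ctmc Z N t w) = (\<Sum>z\<in>UNIV. h z * indicator (A \<inter> {w\<in>space M. ctmc Z N t w = z}) w)"
    if w: "w \<in> space M" for w
  proof -
    have "(\<Sum>z\<in>UNIV. h z * indicator (A \<inter> {w\<in>space M. ctmc Z N t w = z}) w)
        = (\<Sum>z\<in>UNIV. (if z = ctmc Z N t w then h z * indicator A w else 0))"
      using w by (intro sum.cong refl) (auto simp: indicator_def)
    also have "\<dots> = h (ctmc Z N t w) * indicator A w" by (simp add: sum.delta)
    finally show ?thesis by (simp only: mult.commute)
  qed
  have "(\<integral>w\<in>A. h (ctmc Z N t w) \<partial>M) = (\<integral>w. indicator A w * h (ctmc Z N t w) \<partial>M)"
    unfolding set_lebesgue_integral_def by simp
  also have "\<dots> = (\<integral>w. (\<Sum>z\<in>UNIV. h z * indicator (A \<inter> {w\<in>space M. ctmc Z N t w = z}) w) \<partial>M)"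
    by (rule Bochner_Integration.integral_cong[OF refl pt])
  also have "\<dots> = (\<Sum>z\<in>UNIV. (\<integral>w. h z * indicator (A \<inter> {w\<in>space M. ctmc Z N t w = z}) w \<partial>M))"
  proof (rule Bochner_Integration.integral_sum)
    fix z
    have "emeasure M (A \<inter> {w\<in>space M. ctmc Z N t w = z}) < \<top>"
      by (rule emeasure_finite[THEN less_top[THEN iffD1]])
    then have "emeasure M (A \<inter> {w\<in>space M. ctmc Z N t w = z}) < \<infinity>"
      by (simp only: infinity_ennreal_def)
    then show "integrable M (\<lambda>w. h z * indicator (A \<inter> {w\<in>space M. ctmc Z N t w = z}) w)"
      by (intro integrable_mult_right integrable_real_indicator m)
  qed
  also have "\<dots> = (\<Sum>z\<in>UNIV. h z * prob (A \<inter> {w\<in>space M. ctmc Z N t w = z}))"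
  proof (intro sum.cong refl)
    fix z
    have ii: "(A \<inter> {w\<in>space M. ctmc Z N t w = z}) \<inter> space M = A \<inter> {w\<in>space M. ctmc Z N t w = z}" by blast
    show "(\<integral>w. h z * indicator (A \<inter> {w\<in>space M. ctmc Z N t w = z}) w \<partial>M) = h z * prob (A \<inter> {w\<in>space M. ctmc Z N t w = z})"
      by (simp only: integral_mult_right_zero Bochner_Integration.integral_indicator ii)
  qed
  finally show ?thesis .
qed

lemma integrable_X: "integrable M (\<lambda>w. (h::'s \<Rightarrow> real) (ctmc Z N t w))"
proof (rule integrable_const_bound[where B = "\<Sum>z\<in>UNIV. \<bar>h z\<bar>"])
  show "AE x in M. norm (h (ctmc Z N t x)) \<le> (\<Sum>z\<in>UNIV. \<bar>h z\<bar>)"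
  proof (intro AE_I2)
    fix x
    have "\<bar>h (ctmc Z N t x)\<bar> \<le> (\<Sum>z\<in>UNIV. \<bar>h z\<bar>)"
      by (rule member_le_sum[of _ UNIV "\<lambda>z. \<bar>h z\<bar>"]) auto
    then show "norm (h (ctmc Z N t x)) \<le> (\<Sum>z\<in>UNIV. \<bar>h z\<bar>)" by simp
  qed
  show "(\<lambda>w. h (ctmc Z N t w)) \<in> borel_measurable M"
    by (rule measurable_compose[OF X_meas borel_measurable_count_space])
qed

lemma cond_exp_X:
  assumes ab: "0 \<le> a" "a < b" "b \<le> T"
  shows "AE w in M. real_cond_exp M (rev_filtration M (ctmc Z N) T (T - b)) (\<lambda>w. h (ctmc Z N a w)) w
     = (\<lambda>x. (\<Sum>z\<in>UNIV. h z * prob {w\<in>space M. ctmc Z N a w = z \<and> ctmc Z N b w = x}) / prob {w\<in>space M. ctmc Z N b w = x}) (ctmc Z N b w)"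
proof -
  let ?F = "rev_filtration M (ctmc Z N) T (T - b)"
  interpret finite_measure_subalgebra M ?F
    by unfold_locales (rule F_subalg)
  let ?J = "\<lambda>z x. prob {w\<in>space M. ctmc Z N a w = z \<and> ctmc Z N b w = x}"
  let ?P = "\<lambda>x. prob {w\<in>space M. ctmc Z N b w = x}"
  let ?g = "\<lambda>x. (\<Sum>z\<in>UNIV. h z * ?J z x) / ?P x"
  have Tb: "T - (T - b) = b" by simp
  show ?thesis
  proof (rule real_cond_exp_charact)
    show "integrable M (\<lambda>w. h (ctmc Z N a w))" by (rule integrable_X)
    show "integrable M (\<lambda>w. ?g (ctmc Z N b w))" by (rule integrable_X)
    show "(\<lambda>w. ?g (ctmc Z N b w)) \<in> borel_measurable ?F"
      using measurable_compose[OF X_Fmeas[of "T - b" T] borel_measurable_count_space] ab by (simp add: Tb)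
  next
    fix A assume "A \<in> sets ?F"
    then have AC: "A \<in> sigma_sets (space M) (Cyl b T)"
      unfolding sets_F using sigma_sets_mono[OF Gen_Cyl[of "T - b" T]] ab by auto
    then have Am: "A \<in> sets M" using Cyl_sigma_sets by auto
    have C1m: "A \<inter> {w\<in>space M. ctmc Z N a w = z \<and> ctmc Z N b w = x} \<in> sets M" for z x using Am by measurable
    have key: "prob (A \<inter> {w\<in>space M. ctmc Z N a w = z \<and> ctmc Z N b w = x})
        = ?J z x / ?P x * prob (A \<inter> {w\<in>space M. ctmc Z N b w = x})" for z x
    proof (cases "?P x = 0")
      case True
      have "prob (A \<inter> {w\<in>space M. ctmc Z N a w = z \<and> ctmc Z N b w = x}) \<le> ?P x"
        by (rule finite_measure_mono) auto
      then show ?thesis using True measure_nonneg[of M] by (simp add: order_antisym)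
    next
      case False
      then show ?thesis using KM_all[OF ab(1,2) AC, of z x] by (simp add: field_simps)
    qed
    have split: "prob (A \<inter> {w\<in>space M. ctmc Z N a w = z})
        = (\<Sum>x\<in>UNIV. prob (A \<inter> {w\<in>space M. ctmc Z N a w = z \<and> ctmc Z N b w = x}))" for z
    proof -
      have "A \<inter> {w\<in>space M. ctmc Z N a w = z} = (\<Union>x. A \<inter> {w\<in>space M. ctmc Z N a w = z \<and> ctmc Z N b w = x})"
        by auto
      note eq = this
      show ?thesis unfolding eq
        by (rule finite_measure_finite_Union) (auto simp: C1m disjoint_family_on_def)
    qed
    have "(\<integral>w\<in>A. h (ctmc Z N a w) \<partial>M) = (\<Sum>z\<in>UNIV. h z * prob (A \<inter> {w\<in>space M. ctmc Z N a w = z}))"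
      by (rule set_integral_X[OF Am])
    also have "\<dots> = (\<Sum>z\<in>UNIV. h z * (\<Sum>x\<in>UNIV. ?J z x / ?P x * prob (A \<inter> {w\<in>space M. ctmc Z N b w = x})))"
      by (simp add: split key)
    also have "\<dots> = (\<Sum>z\<in>UNIV. \<Sum>x\<in>UNIV. h z * (?J z x / ?P x * prob (A \<inter> {w\<in>space M. ctmc Z N b w = x})))"
      by (simp only: sum_distrib_left)
    also have "\<dots> = (\<Sum>x\<in>UNIV. \<Sum>z\<in>UNIV. h z * (?J z x / ?P x * prob (A \<inter> {w\<in>space M. ctmc Z N b w = x})))"
      by (rule sum.swap)
    also have "\<dots> = (\<Sum>x\<in>UNIV. ?g x * prob (A \<inter> {w\<in>space M. ctmc Z N b w = x}))"
    proof (rule sum.cong[OF refl])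
      fix x
      show "(\<Sum>z\<in>UNIV. h z * (?J z x / ?P x * prob (A \<inter> {w\<in>space M. ctmc Z N b w = x})))
         = ?g x * prob (A \<inter> {w\<in>space M. ctmc Z N b w = x})"
        by (simp only: sum_divide_distrib sum_distrib_right) (simp add: mult.commute mult.left_commute)
    qed
    also have "\<dots> = (\<integral>w\<in>A. ?g (ctmc Z N b w) \<partial>M)"
      by (rule set_integral_X[OF Am, symmetric])
    finally show "(\<integral>w\<in>A. h (ctmc Z N a w) \<partial>M) = (\<integral>w\<in>A. ?g (ctmc Z N b w) \<partial>M)" .
  qed
qed

end


lemma pos_of_sum1:
  fixes w :: "'a \<Rightarrow> real"
  assumes "finite I" "\<forall>i\<in>I. 0 \<le> w i" "(\<Sum>i\<in>I. w i) = 1" "\<forall>i\<in>I. 0 < l i"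
  shows "0 < (\<Sum>i\<in>I. w i * l i)"
proof -
  obtain i where i: "i \<in> I" "w i \<noteq> 0"
    using assms(3) by (metis (mono_tags, lifting) sum.neutral zero_neq_one)
  then have "0 < w i * l i" using assms by (simp add: order_le_neq_trans)
  then show ?thesis using assms i by (intro sum_pos2[of I i]) auto
qed

lemma ln_lower: "0 < (x::real) \<Longrightarrow> 0 < y \<Longrightarrow> 1 - y / x \<le> ln x - ln y"
proof -
  assume x: "0 < x" and y: "0 < y"
  have "ln (y / x) \<le> y / x - 1" by (rule ln_le_minus_one) (simp add: x y)
  moreover have "ln (y / x) = ln y - ln x" by (rule ln_divide_pos) (simp_all add: x y)
  ultimately show ?thesis by simp
qed

lemma jensen_xlnx:
  fixes w l :: "'a \<Rightarrow> real"
  assumes I: "finite I" and w: "\<forall>i\<in>I. 0 \<le> w i" "(\<Sum>i\<in>I. w i) = 1" and l: "\<forall>i\<in>I. 0 < l i"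
  shows "(\<Sum>i\<in>I. w i * l i) * ln (\<Sum>i\<in>I. w i * l i) \<le> (\<Sum>i\<in>I. w i * (l i * ln (l i)))"
proof -
  define L where "L = (\<Sum>i\<in>I. w i * l i)"
  have L: "0 < L" unfolding L_def by (rule pos_of_sum1[OF I w l])
  have "w i * (l i * ln L + (l i - L)) \<le> w i * (l i * ln (l i))" if i: "i \<in> I" for i
  proof (rule mult_left_mono)
    have "1 - L / l i \<le> ln (l i) - ln L" using ln_lower[of "l i" L] l i L by auto
    then have "l i * (1 - L / l i) \<le> l i * (ln (l i) - ln L)" using l i by (intro mult_left_mono) auto
    moreover have "l i * (L / l i) = L" using l i by (simp add: order_less_imp_not_eq2)
    ultimately show "l i * ln L + (l i - L) \<le> l i * ln (l i)" by (simp add: algebra_simps)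
  qed (use w i in auto)
  then have "(\<Sum>i\<in>I. w i * (l i * ln L + (l i - L))) \<le> (\<Sum>i\<in>I. w i * (l i * ln (l i)))"
    by (rule sum_mono)
  moreover have "(\<Sum>i\<in>I. w i * (l i * ln L + (l i - L))) = L * ln L + L - L * (\<Sum>i\<in>I. w i)"
  proof -
    have "(\<Sum>i\<in>I. w i * (l i * ln L + (l i - L))) = (\<Sum>i\<in>I. (w i * l i) * ln L + w i * l i - L * w i)"
      by (intro sum.cong refl) (simp add: algebra_simps)
    also have "\<dots> = (\<Sum>i\<in>I. w i * l i) * ln L + (\<Sum>i\<in>I. w i * l i) - L * (\<Sum>i\<in>I. w i)"
      by (simp add: sum.distrib sum_subtractf sum_distrib_left sum_distrib_right)
    finally show ?thesis unfolding L_def[symmetric] by simp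
  qed
  ultimately show ?thesis using w unfolding L_def[symmetric] by simp
qed

lemma ln_gibbs:
  fixes v l :: "'a \<Rightarrow> real"
  assumes I: "finite I" and v: "\<forall>i\<in>I. 0 \<le> v i" "(\<Sum>i\<in>I. v i) = 1" and l: "\<forall>i\<in>I. 0 < l i"
    and L: "0 < L" and s: "(\<Sum>i\<in>I. v i / l i) \<le> 1 / L"
  shows "ln L \<le> (\<Sum>i\<in>I. v i * ln (l i))"
proof -
  have "v i * (ln L + 1 - L / l i) \<le> v i * ln (l i)" if i: "i \<in> I" for i
  proof (rule mult_left_mono)
    show "ln L + 1 - L / l i \<le> ln (l i)" using ln_lower[of "l i" L] l i L by auto
  qed (use v i in auto)
  then have "(\<Sum>i\<in>I. v i * (ln L + 1 - L / l i)) \<le> (\<Sum>i\<in>I. v i * ln (l i))" by (rule sum_mono)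
  moreover have "(\<Sum>i\<in>I. v i * (ln L + 1 - L / l i)) = (ln L + 1) * (\<Sum>i\<in>I. v i) - L * (\<Sum>i\<in>I. v i / l i)"
    by (simp add: algebra_simps sum.distrib sum_distrib_left sum_subtractf)
  moreover have "L * (\<Sum>i\<in>I. v i / l i) \<le> 1" using mult_left_mono[OF s, of L] L by simp
  ultimately show ?thesis using v by simp
qed

lemma entropy_nonneg:
  fixes p q :: "'a \<Rightarrow> real"
  assumes I: "finite I" and p: "\<forall>i\<in>I. 0 < p i" "(\<Sum>i\<in>I. p i) = 1" and q: "\<forall>i\<in>I. 0 < q i" "(\<Sum>i\<in>I. q i) = 1"
  shows "0 \<le> (\<Sum>i\<in>I. p i * ln (p i / q i))"
proof -
  have "p i - q i \<le> p i * ln (p i / q i)" if i: "i \<in> I" for i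
  proof -
    have "1 - q i / p i \<le> ln (p i) - ln (q i)" using ln_lower[of "p i" "q i"] p q i by auto
    then have "p i * (1 - q i / p i) \<le> p i * (ln (p i) - ln (q i))" using p i by (intro mult_left_mono) auto
    moreover have "ln (p i / q i) = ln (p i) - ln (q i)" by (rule ln_divide_pos) (use p q i in auto)
    then have "p i * ln (p i / q i) = p i * ln (p i) - p i * ln (q i)" by (simp add: right_diff_distrib)
    moreover have "p i * (q i / p i) = q i" using p i by (simp add: order_less_imp_not_eq2)
    ultimately show ?thesis by (simp add: right_diff_distrib)
  qed
  then have "(\<Sum>i\<in>I. p i - q i) \<le> (\<Sum>i\<in>I. p i * ln (p i / q i))" by (rule sum_mono)
  then show ?thesis using p q by (simp add: sum_subtractf)
qed

context uchain
begin

lemma sub_gen: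
  fixes \<phi> :: "real \<Rightarrow> 's \<Rightarrow> real"
  assumes T: "0 \<le> T"
    and ineq: "\<And>a b x. 0 \<le> a \<Longrightarrow> a < b \<Longrightarrow> b \<le> T \<Longrightarrow>
       \<phi> b x \<le> (\<Sum>z\<in>UNIV. \<phi> a z * prob {w\<in>space M. ctmc Z N a w = z \<and> ctmc Z N b w = x}) / prob {w\<in>space M. ctmc Z N b w = x}"
  shows "submartingale_on M (rev_filtration M (ctmc Z N) T) {0..T} (\<lambda>s w. \<phi> (T - s) (ctmc Z N (T - s) w))"
  unfolding submartingale_on_def
proof (intro conjI ballI impI)
  fix s assume "s \<in> {0..T}"
  show "subalgebra M (rev_filtration M (ctmc Z N) T s)" by (rule F_subalg)
next
  fix s u assume "s \<in> {0..T}" "u \<in> {0..T}" "s \<le> u"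
  show "sets (rev_filtration M (ctmc Z N) T s) \<subseteq> sets (rev_filtration M (ctmc Z N) T u)" using \<open>s \<le> u\<close> by (rule F_mono)
next
  fix s assume s: "s \<in> {0..T}"
  show "(\<lambda>w. \<phi> (T - s) (ctmc Z N (T - s) w)) \<in> borel_measurable (rev_filtration M (ctmc Z N) T s)"
    using s by (intro measurable_compose[OF X_Fmeas borel_measurable_count_space]) auto
  show "integrable M (\<lambda>w. \<phi> (T - s) (ctmc Z N (T - s) w))" by (rule integrable_X)
next
  fix s u assume s: "s \<in> {0..T}" and u: "u \<in> {0..T}" and su: "s \<le> u"
  let ?F = "rev_filtration M (ctmc Z N) T s"
  interpret finite_measure_subalgebra M ?F by unfold_locales (rule F_subalg)
  show "AE w in M. \<phi> (T - s) (ctmc Z N (T - s) w) \<le> real_cond_exp M ?F (\<lambda>w. \<phi> (T - u) (ctmc Z N (T - u) w)) w"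
  proof (cases "s = u")
    case True
    have "AE w in M. real_cond_exp M ?F (\<lambda>w. \<phi> (T - s) (ctmc Z N (T - s) w)) w = \<phi> (T - s) (ctmc Z N (T - s) w)"
      using s by (intro real_cond_exp_F_meas integrable_X measurable_compose[OF X_Fmeas borel_measurable_count_space]) auto
    then show ?thesis using True by auto
  next
    case False
    let ?a = "T - u" and ?b = "T - s"
    have ab: "0 \<le> ?a" "?a < ?b" "?b \<le> T" using s u su False by auto
    have Tb: "T - ?b = s" by simp
    have ae: "AE w in M. real_cond_exp M ?F (\<lambda>w. \<phi> ?a (ctmc Z N ?a w)) w
      = (\<lambda>x. (\<Sum>z\<in>UNIV. \<phi> ?a z * prob {w\<in>space M. ctmc Z N ?a w = z \<and> ctmc Z N ?b w = x}) / prob {w\<in>space M. ctmc Z N ?b w = x}) (ctmc Z N ?b w)"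
      using cond_exp_X[OF ab, of "\<phi> ?a"] unfolding Tb .
    show ?thesis
      using ae by eventually_elim (use ineq[OF ab] in simp)
  qed
qed

lemma X0: "prob {w\<in>space M. ctmc Z N 0 w = y} = p0 y"
proof -
  have "{w\<in>space M. ctmc Z N 0 w = y} = {w\<in>space M. \<forall>i\<le>0. Z i w = (\<lambda>_. y) i}"
    by (auto simp: ctmc_def N0)
  then show ?thesis using markov[of 0 "\<lambda>_. y"] by simp
qed

lemma two_time:
  assumes "0 \<le> a" "a \<le> b"
  shows "prob {w\<in>space M. ctmc Z N a w = z \<and> ctmc Z N b w = x} = prob {w\<in>space M. ctmc Z N a w = z} * Kt Pi (b - a) z x"
proof -
  have "prob {w\<in>space M. (\<forall>v\<in>{a}. ctmc Z N v w = (\<lambda>_. z) v) \<and> ctmc Z N b w = x}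
     = prob {w\<in>space M. \<forall>v\<in>{a}. ctmc Z N v w = (\<lambda>_. z) v} * Kt Pi (b - a) ((\<lambda>_. z) a) x"
    using assms by (intro MS) auto
  then show ?thesis by simp
qed

lemma marg:
  "prob {w\<in>space M. ctmc Z N b w = x} = (\<Sum>z\<in>UNIV. prob {w\<in>space M. ctmc Z N a w = z \<and> ctmc Z N b w = x})"
proof -
  have "{w\<in>space M. ctmc Z N b w = x} = (\<Union>z. {w\<in>space M. ctmc Z N a w = z \<and> ctmc Z N b w = x})" by auto
  then show ?thesis by (simp only:) (rule finite_measure_finite_Union, auto simp: disjoint_family_on_def)
qed

lemma marg_K:
  assumes "0 \<le> a" "a \<le> b"
  shows "prob {w\<in>space M. ctmc Z N b w = x} = (\<Sum>z\<in>UNIV. prob {w\<in>space M. ctmc Z N a w = z} * Kt Pi (b - a) z x)"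
  using marg[of b x a] two_time[OF assms] by simp

lemma total: "(\<Sum>y\<in>UNIV. prob {w\<in>space M. ctmc Z N t w = y}) = 1"
proof -
  have "(\<Union>y. {w\<in>space M. ctmc Z N t w = y}) = space M" by auto
  moreover have "prob (\<Union>y. {w\<in>space M. ctmc Z N t w = y}) = (\<Sum>y\<in>UNIV. prob {w\<in>space M. ctmc Z N t w = y})"
    by (rule finite_measure_finite_Union) (auto simp: disjoint_family_on_def)
  ultimately show ?thesis using prob_space by simp
qed

end


lemma kernel_jensen:
  fixes q l c :: "'s::finite \<Rightarrow> real"
  assumes q: "\<forall>z. 0 < q z" and c: "\<forall>z. 0 \<le> c z" and Q: "(\<Sum>z\<in>UNIV. q z * c z) = Q" "0 < Q"
    and l: "\<forall>z. 0 < l z"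
  shows "((\<Sum>z\<in>UNIV. q z * c z * l z) / Q) * ln ((\<Sum>z\<in>UNIV. q z * c z * l z) / Q)
         \<le> (\<Sum>z\<in>UNIV. q z * c z * (l z * ln (l z))) / Q"
proof -
  let ?w = "\<lambda>z. q z * c z / Q"
  have w: "\<forall>z\<in>UNIV. 0 \<le> ?w z"
  proof
    fix z
    have "0 \<le> q z" "0 \<le> c z" "0 \<le> Q" using q c Q by (auto simp: less_imp_le)
    then show "0 \<le> ?w z" by simp
  qed
  have w1: "(\<Sum>z\<in>UNIV. ?w z) = 1" using Q by (simp add: sum_divide_distrib[symmetric])
  have e1: "(\<Sum>z\<in>UNIV. ?w z * l z) = (\<Sum>z\<in>UNIV. q z * c z * l z) / Q"
    by (simp add: sum_divide_distrib)
  have e2: "(\<Sum>z\<in>UNIV. ?w z * (l z * ln (l z))) = (\<Sum>z\<in>UNIV. q z * c z * (l z * ln (l z))) / Q"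
    by (simp add: sum_divide_distrib)
  show ?thesis using jensen_xlnx[of UNIV ?w l] w w1 l unfolding e1 e2 by simp
qed

lemma kernel_gibbs:
  fixes q pa c :: "'s::finite \<Rightarrow> real"
  assumes q: "\<forall>z. 0 < q z" and pa: "\<forall>z. 0 < pa z" and c: "\<forall>z. 0 \<le> c z"
    and Pb: "(\<Sum>z\<in>UNIV. pa z * c z) = Pb" "0 < Pb"
    and qx: "(\<Sum>z\<in>UNIV. q z * c z) = qx" "0 < qx"
  shows "ln (Pb / qx) \<le> (\<Sum>z\<in>UNIV. ln (pa z / q z) * (pa z * c z)) / Pb"
proof -
  let ?v = "\<lambda>z. pa z * c z / Pb"
  let ?l = "\<lambda>z. pa z / q z"
  have v: "\<forall>z\<in>UNIV. 0 \<le> ?v z"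
  proof
    fix z
    have "0 \<le> pa z" "0 \<le> c z" "0 \<le> Pb" using pa c Pb by (auto simp: less_imp_le)
    then show "0 \<le> ?v z" by simp
  qed
  have v1: "(\<Sum>z\<in>UNIV. ?v z) = 1" using Pb by (simp add: sum_divide_distrib[symmetric])
  have l: "\<forall>z\<in>UNIV. 0 < ?l z" using pa q by simp
  have L: "0 < Pb / qx" using Pb qx by simp
  have "(\<Sum>z\<in>UNIV. ?v z / ?l z) = (\<Sum>z\<in>UNIV. q z * c z) / Pb"
  proof -
    have "?v z / ?l z = q z * c z / Pb" for z
      using pa[rule_format, of z] q[rule_format, of z] by (simp add: field_simps)
    then show ?thesis by (simp add: sum_divide_distrib)
  qed
  also have "\<dots> = 1 / (Pb / qx)" using qx by simp
  finally have s: "(\<Sum>z\<in>UNIV. ?v z / ?l z) \<le> 1 / (Pb / qx)" by simp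
  have "ln (Pb / qx) \<le> (\<Sum>z\<in>UNIV. ?v z * ln (?l z))"
    by (rule ln_gibbs[OF _ v v1 l L s]) simp
  also have "\<dots> = (\<Sum>z\<in>UNIV. ln (pa z / q z) * (pa z * c z)) / Pb"
    by (simp add: sum_divide_distrib mult.commute)
  finally show ?thesis .
qed

lemma doeblin_conv:
  fixes p :: "real \<Rightarrow> 's::finite \<Rightarrow> real" and q :: "'s \<Rightarrow> real" and K :: "'s \<Rightarrow> 's \<Rightarrow> real"
  assumes Kr: "\<forall>x. (\<Sum>y\<in>UNIV. K x y) = 1" and Kd: "\<forall>x y. \<delta> \<le> K x y" and d: "0 < \<delta>"
    and step: "\<And>t y. 1 \<le> t \<Longrightarrow> p t y = (\<Sum>x\<in>UNIV. p (t - 1) x * K x y)"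
    and qinv: "\<And>y. q y = (\<Sum>x\<in>UNIV. q x * K x y)"
    and pnn: "\<And>t y. 0 \<le> t \<Longrightarrow> 0 \<le> p t y" and ps: "\<And>t. 0 \<le> t \<Longrightarrow> (\<Sum>y\<in>UNIV. p t y) = 1"
    and qnn: "\<And>y. 0 \<le> q y" and qs: "(\<Sum>y\<in>UNIV. q y) = 1"
  shows "((\<lambda>t. p t y) \<longlongrightarrow> q y) at_top"
proof -
  define D where "D t = (\<Sum>y\<in>UNIV. \<bar>p t y - q y\<bar>)" for t
  define c where "c = 1 - real (card (UNIV::'s set)) * \<delta>"
  have D2: "D t \<le> 2" if "0 \<le> t" for t
  proof -
    have "D t \<le> (\<Sum>y\<in>UNIV. p t y + q y)" unfolding D_def
      by (intro sum_mono) (use pnn[OF that] qnn in \<open>auto simp: abs_le_iff\<close>)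
    also have "\<dots> = 2" using ps[OF that] qs by (simp add: sum.distrib)
    finally show ?thesis .
  qed
  have c0: "0 \<le> c"
  proof -
    obtain x0 :: 's where True by simp
    have "(\<Sum>y\<in>(UNIV::'s set). \<delta>) \<le> (\<Sum>y\<in>UNIV. K x0 y)" by (rule sum_mono) (use Kd in auto)
    then show ?thesis using Kr by (simp add: c_def)
  qed
  have c1: "c < 1"
  proof -
    have "0 < real (card (UNIV::'s set))" by simp
    then show ?thesis using d by (simp add: c_def)
  qed
  have contr: "D t \<le> c * D (t - 1)" if t: "1 \<le> t" for t
  proof -
    let ?d = "\<lambda>x. p (t - 1) x - q x"
    have sd: "(\<Sum>x\<in>UNIV. ?d x) = 0" using ps[of "t - 1"] qs t by (simp add: sum_subtractf)
    have "\<bar>p t y - q y\<bar> \<le> (\<Sum>x\<in>UNIV. \<bar>?d x\<bar> * (K x y - \<delta>))" for y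
    proof -
      have "p t y - q y = (\<Sum>x\<in>UNIV. ?d x * K x y)"
        using step[OF t, of y] qinv[of y] by (simp add: sum_subtractf left_diff_distrib)
      also have "\<dots> = (\<Sum>x\<in>UNIV. ?d x * (K x y - \<delta>) + \<delta> * ?d x)"
        by (intro sum.cong refl) (simp add: algebra_simps)
      also have "\<dots> = (\<Sum>x\<in>UNIV. ?d x * (K x y - \<delta>)) + \<delta> * (\<Sum>x\<in>UNIV. ?d x)"
        by (simp only: sum.distrib sum_distrib_left)
      also have "\<dots> = (\<Sum>x\<in>UNIV. ?d x * (K x y - \<delta>))" using sd by simp
      finally have "\<bar>p t y - q y\<bar> = \<bar>\<Sum>x\<in>UNIV. ?d x * (K x y - \<delta>)\<bar>" by simp
      also have "\<dots> \<le> (\<Sum>x\<in>UNIV. \<bar>?d x * (K x y - \<delta>)\<bar>)" by (rule sum_abs)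
      also have "\<dots> = (\<Sum>x\<in>UNIV. \<bar>?d x\<bar> * (K x y - \<delta>))"
        using Kd by (intro sum.cong refl) (simp add: abs_mult)
      finally show ?thesis .
    qed
    then have "D t \<le> (\<Sum>y\<in>UNIV. \<Sum>x\<in>UNIV. \<bar>?d x\<bar> * (K x y - \<delta>))" unfolding D_def by (rule sum_mono)
    also have "\<dots> = (\<Sum>x\<in>UNIV. \<bar>?d x\<bar> * (\<Sum>y\<in>UNIV. (K x y - \<delta>)))"
      by (subst sum.swap) (simp add: sum_distrib_left)
    also have "\<dots> = (\<Sum>x\<in>UNIV. \<bar>?d x\<bar> * c)"
      using Kr by (simp add: sum_subtractf c_def)
    also have "\<dots> = c * D (t - 1)" by (simp add: D_def sum_distrib_left mult.commute)
    finally show ?thesis .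
  qed
  have bound: "\<forall>t. real n \<le> t \<longrightarrow> D t \<le> 2 * c ^ n" for n
  proof (induction n)
    case 0 then show ?case using D2 by simp
  next
    case (Suc n)
    show ?case
    proof (intro allI impI)
      fix t assume t: "real (Suc n) \<le> t"
      then have "D t \<le> c * D (t - 1)" by (intro contr) auto
      also have "\<dots> \<le> c * (2 * c ^ n)" using Suc t c0 by (intro mult_left_mono) auto
      finally show "D t \<le> 2 * c ^ Suc n" by simp
    qed
  qed
  have D0: "(D \<longlongrightarrow> 0) at_top"
  proof (rule tendstoI)
    fix e :: real assume e: "0 < e"
    have "(\<lambda>n. 2 * c ^ n) \<longlonglongrightarrow> 2 * 0" using c0 c1 by (intro tendsto_mult tendsto_const LIMSEQ_power_zero) simp
    then have "eventually (\<lambda>n. 2 * c ^ n < e) sequentially" using e by (intro order_tendstoD(2)) auto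
    then obtain n where n: "2 * c ^ n < e" unfolding eventually_sequentially by auto
    have "eventually (\<lambda>t. real n \<le> t) at_top" by (rule eventually_ge_at_top)
    then show "eventually (\<lambda>t. dist (D t) 0 < e) at_top"
    proof (rule eventually_mono)
      fix t assume t: "real n \<le> t"
      then have "0 \<le> D t" unfolding D_def by (intro sum_nonneg) auto
      then show "dist (D t) 0 < e" using bound[of n] t n by auto
    qed
  qed
  have "((\<lambda>t. p t y - q y) \<longlongrightarrow> 0) at_top"
  proof (rule Lim_null_comparison[OF _ D0])
    show "eventually (\<lambda>t. norm (p t y - q y) \<le> D t) at_top"
      unfolding D_def by (intro always_eventually allI) (auto intro: member_le_sum[of y UNIV "\<lambda>y. \<bar>p _ y - q y\<bar>"])
  qed
  then show ?thesis by (simp add: LIM_zero_iff)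
qed


theorem proposition7p1:
  fixes Pi :: "'s::finite \<Rightarrow> 's \<Rightarrow> real"
    and q p0 :: "'s \<Rightarrow> real"
    and MP MQ :: "'w measure"
    and Z :: "nat \<Rightarrow> 'w \<Rightarrow> 's"
    and N :: "real \<Rightarrow> 'w \<Rightarrow> nat"
    and T :: real
  assumes "stochastic_matrix Pi" and "irreducible_matrix Pi"
    and "invariant_distribution Pi q"
    and "\<forall>y. 0 < p0 y"
    and "uniformized_chain MP Pi p0 Z N"
    and "uniformized_chain MQ Pi q Z N"
    and "0 < T"
  defines "p \<equiv> \<lambda>t y. measure MP {w \<in> space MP. ctmc Z N t w = y}"
    and "ell \<equiv> \<lambda>t y. measure MP {w \<in> space MP. ctmc Z N t w = y} / q y"
  shows "submartingale_on MQ (rev_filtration MQ (ctmc Z N) T) {0..T}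
           (\<lambda>s w. ell (T - s) (ctmc Z N (T - s) w) * ln (ell (T - s) (ctmc Z N (T - s) w)))
         \<and> (\<forall>t\<ge>0. 0 \<le> rel_entropy (p t) q)
         \<and> (\<forall>s t. 0 \<le> s \<longrightarrow> s \<le> t \<longrightarrow> rel_entropy (p t) q \<le> rel_entropy (p s) q)
         \<and> ((\<lambda>t. rel_entropy (p t) q) \<longlongrightarrow> 0) at_top
         \<and> submartingale_on MP (rev_filtration MP (ctmc Z N) T) {0..T}
           (\<lambda>s w. ln (ell (T - s) (ctmc Z N (T - s) w)))"
proof -
  note st = assms(1)
  interpret P: uchain MP Pi p0 Z N using assms(5,1) by (rule uchain.intro)
  interpret Q: uchain MQ Pi q Z N using assms(6,1) by (rule uchain.intro)
  have qnn: "\<And>y. 0 \<le> q y" and qs: "(\<Sum>y\<in>UNIV. q y) = 1"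
    using assms(3) by (auto simp: invariant_distribution_def)
  have qpos: "0 < q y" for y
  proof -
    obtain x0 where x0: "q x0 \<noteq> 0" using qs by (metis sum.neutral zero_neq_one)
    then have x0': "0 < q x0" using qnn[of x0] by simp
    obtain n where n: "0 < mpow Pi n x0 y" using assms(2) by (auto simp: irreducible_matrix_def)
    have "q x0 * mpow Pi n x0 y \<le> (\<Sum>x\<in>UNIV. q x * mpow Pi n x y)"
      by (rule member_le_sum[of x0 UNIV "\<lambda>x. q x * mpow Pi n x y"]) (auto intro!: mult_nonneg_nonneg qnn mpow_nonneg[OF st])
    also have "\<dots> = q y" by (rule mpow_invariant[OF assms(3)])
    finally show ?thesis using x0' n by (smt (verit) mult_pos_pos)
  qed
  have ellp: "\<And>t y. ell t y = p t y / q y" by (simp add: ell_def p_def)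
  have pK: "p t y = (\<Sum>x\<in>UNIV. p s x * Kt Pi (t - s) x y)" if "0 \<le> s" "s \<le> t" for s t y
    using P.marg_K[OF that] by (simp add: p_def)
  have pnn: "\<And>t y. 0 \<le> p t y" by (simp add: p_def)
  have ps: "\<And>t. (\<Sum>y\<in>UNIV. p t y) = 1" using P.total by (simp add: p_def)
  have ppos: "0 < p t y" if t: "0 \<le> t" for t y
  proof -
    have "p 0 y * Kt Pi (t - 0) y y \<le> (\<Sum>x\<in>UNIV. p 0 x * Kt Pi (t - 0) x y)"
      by (rule member_le_sum[of y UNIV "\<lambda>x. p 0 x * Kt Pi (t - 0) x y"])
         (auto intro!: mult_nonneg_nonneg pnn Kt_nonneg[OF st] t)
    then have a: "p 0 y * Kt Pi t y y \<le> p t y" using pK[of 0 t y] t by simp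
    have "pois t 0 * mpow Pi 0 y y \<le> Kt Pi t y y" by (rule Kt_ge_term[OF st t])
    then have b: "exp (- t) \<le> Kt Pi t y y" by (simp add: pois_def)
    have c: "p 0 y = p0 y" using P.X0 by (simp add: p_def)
    have "0 < p0 y * exp (- t)" using assms(4) by simp
    also have "\<dots> \<le> p 0 y * Kt Pi t y y" using b c assms(4) by (simp add: less_imp_le)
    finally show ?thesis using a by simp
  qed
  have QX: "Q.prob {w\<in>space MQ. ctmc Z N t w = x} = q x" if t: "0 \<le> t" for t x
  proof -
    have "Q.prob {w\<in>space MQ. ctmc Z N t w = x} = (\<Sum>z\<in>UNIV. Q.prob {w\<in>space MQ. ctmc Z N 0 w = z} * Kt Pi (t - 0) z x)"
      using Q.marg_K[of 0 t x] t by simp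
    also have "\<dots> = (\<Sum>z\<in>UNIV. q z * Kt Pi t z x)" using Q.X0 by simp
    also have "\<dots> = q x" by (rule Kt_invariant[OF st assms(3) t])
    finally show ?thesis .
  qed
  have QJ: "Q.prob {w\<in>space MQ. ctmc Z N a w = z \<and> ctmc Z N b w = x} = q z * Kt Pi (b - a) z x"
    if "0 \<le> a" "a \<le> b" for a b z x
    using Q.two_time[OF that] QX[OF that(1)] by simp
  have PJ: "P.prob {w\<in>space MP. ctmc Z N a w = z \<and> ctmc Z N b w = x} = p a z * Kt Pi (b - a) z x"
    if "0 \<le> a" "a \<le> b" for a b z x
    using P.two_time[OF that] by (simp add: p_def)
  have PX: "P.prob {w\<in>space MP. ctmc Z N b w = x} = p b x" for b x by (simp add: p_def)

  have part1: "submartingale_on MQ (rev_filtration MQ (ctmc Z N) T) {0..T}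
           (\<lambda>s w. ell (T - s) (ctmc Z N (T - s) w) * ln (ell (T - s) (ctmc Z N (T - s) w)))"
  proof (rule Q.sub_gen[where \<phi> = "\<lambda>t y. ell t y * ln (ell t y)"])
    show "0 \<le> T" using assms(7) by simp
  next
    fix a b x assume ab: "0 \<le> a" "a < b" "b \<le> T"
    let ?K = "Kt Pi (b - a)"
    have eqsum: "(\<Sum>z\<in>UNIV. ell a z * ln (ell a z) * Q.prob {w\<in>space MQ. ctmc Z N a w = z \<and> ctmc Z N b w = x})
         / Q.prob {w\<in>space MQ. ctmc Z N b w = x}
       = (\<Sum>z\<in>UNIV. q z * ?K z x * (ell a z * ln (ell a z))) / q x"
      using QJ[of a b] QX[of b x] ab by (simp add: mult.commute mult.left_commute)
    have L: "(\<Sum>z\<in>UNIV. q z * ?K z x * ell a z) / q x = ell b x"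
    proof -
      have e: "q z * ?K z x * ell a z = p a z * ?K z x" for z
        using qpos[of z] by (simp add: ellp field_simps)
      have "(\<Sum>z\<in>UNIV. q z * ?K z x * ell a z) = (\<Sum>z\<in>UNIV. p a z * ?K z x)"
        by (rule sum.cong[OF refl]) (rule e)
      then have "(\<Sum>z\<in>UNIV. q z * ?K z x * ell a z) = p b x" using pK[of a b x] ab by simp
      then show ?thesis by (simp add: ellp)
    qed
    have J: "((\<Sum>z\<in>UNIV. q z * ?K z x * ell a z) / q x) * ln ((\<Sum>z\<in>UNIV. q z * ?K z x * ell a z) / q x)
         \<le> (\<Sum>z\<in>UNIV. q z * ?K z x * (ell a z * ln (ell a z))) / q x"
    proof (rule kernel_jensen)
      show "\<forall>z. 0 < q z" using qpos by simp
      show "\<forall>z. 0 \<le> ?K z x" using ab by (auto intro: Kt_nonneg[OF st])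
      show "(\<Sum>z\<in>UNIV. q z * ?K z x) = q x" using ab by (intro Kt_invariant[OF st assms(3)]) auto
      show "0 < q x" by (rule qpos)
      show "\<forall>z. 0 < ell a z" using ppos ab qpos by (simp add: ellp)
    qed
    show "ell b x * ln (ell b x) \<le> (\<Sum>z\<in>UNIV. ell a z * ln (ell a z) * Q.prob {w\<in>space MQ. ctmc Z N a w = z \<and> ctmc Z N b w = x})
         / Q.prob {w\<in>space MQ. ctmc Z N b w = x}"
      using J unfolding eqsum L .
  qed

  have part3: "submartingale_on MP (rev_filtration MP (ctmc Z N) T) {0..T}
           (\<lambda>s w. ln (ell (T - s) (ctmc Z N (T - s) w)))"
  proof (rule P.sub_gen[where \<phi> = "\<lambda>t y. ln (ell t y)"])
    show "0 \<le> T" using assms(7) by simp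
  next
    fix a b x assume ab: "0 \<le> a" "a < b" "b \<le> T"
    let ?K = "Kt Pi (b - a)"
    have eqsum: "(\<Sum>z\<in>UNIV. ln (ell a z) * P.prob {w\<in>space MP. ctmc Z N a w = z \<and> ctmc Z N b w = x})
         / P.prob {w\<in>space MP. ctmc Z N b w = x}
       = (\<Sum>z\<in>UNIV. ln (p a z / q z) * (p a z * ?K z x)) / p b x"
      using PJ[of a b] PX[of b x] ab by (simp add: ellp)
    have G: "ln (p b x / q x) \<le> (\<Sum>z\<in>UNIV. ln (p a z / q z) * (p a z * ?K z x)) / p b x"
    proof (rule kernel_gibbs)
      show "\<forall>z. 0 < q z" using qpos by simp
      show "\<forall>z. 0 < p a z" using ppos ab by simp
      show "\<forall>z. 0 \<le> ?K z x" using ab by (auto intro: Kt_nonneg[OF st])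
      show "(\<Sum>z\<in>UNIV. p a z * ?K z x) = p b x" using pK[of a b x] ab by simp
      show "0 < p b x" using ppos ab by simp
      show "(\<Sum>z\<in>UNIV. q z * ?K z x) = q x" using ab by (intro Kt_invariant[OF st assms(3)]) auto
      show "0 < q x" by (rule qpos)
    qed
    show "ln (ell b x) \<le> (\<Sum>z\<in>UNIV. ln (ell a z) * P.prob {w\<in>space MP. ctmc Z N a w = z \<and> ctmc Z N b w = x})
         / P.prob {w\<in>space MP. ctmc Z N b w = x}"
      using G unfolding eqsum by (simp add: ellp)
  qed

  have part2a: "\<forall>t\<ge>0. 0 \<le> rel_entropy (p t) q"
  proof (intro allI impI)
    fix t :: real assume t: "0 \<le> t"
    show "0 \<le> rel_entropy (p t) q" unfolding rel_entropy_def
      by (rule entropy_nonneg) (use ppos[OF t] ps qpos qs in auto)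
  qed

  have Hq: "rel_entropy (p t) q = (\<Sum>y\<in>UNIV. q y * (ell t y * ln (ell t y)))" for t
    unfolding rel_entropy_def
  proof (intro sum.cong refl)
    fix y
    show "p t y * ln (p t y / q y) = q y * (ell t y * ln (ell t y))"
      using qpos[of y] by (simp add: ellp)
  qed

  have part2b: "\<forall>s t. 0 \<le> s \<longrightarrow> s \<le> t \<longrightarrow> rel_entropy (p t) q \<le> rel_entropy (p s) q"
  proof (intro allI impI)
    fix s t :: real assume s: "0 \<le> s" and st': "s \<le> t"
    let ?K = "Kt Pi (t - s)"
    have K0: "0 \<le> t - s" using st' by simp
    have each: "q y * (ell t y * ln (ell t y)) \<le> (\<Sum>x\<in>UNIV. q x * ?K x y * (ell s x * ln (ell s x)))" for y
    proof -
      have L: "(\<Sum>x\<in>UNIV. q x * ?K x y * ell s x) / q y = ell t y"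
      proof -
        have e: "q x * ?K x y * ell s x = p s x * ?K x y" for x
          using qpos[of x] by (simp add: ellp field_simps)
        have "(\<Sum>x\<in>UNIV. q x * ?K x y * ell s x) = (\<Sum>x\<in>UNIV. p s x * ?K x y)"
          by (rule sum.cong[OF refl]) (rule e)
        then have "(\<Sum>x\<in>UNIV. q x * ?K x y * ell s x) = p t y" using pK[of s t y] s st' by simp
        then show ?thesis by (simp add: ellp)
      qed
      have J: "((\<Sum>x\<in>UNIV. q x * ?K x y * ell s x) / q y) * ln ((\<Sum>x\<in>UNIV. q x * ?K x y * ell s x) / q y)
         \<le> (\<Sum>x\<in>UNIV. q x * ?K x y * (ell s x * ln (ell s x))) / q y"
      proof (rule kernel_jensen)
        show "\<forall>z. 0 < q z" using qpos by simp
        show "\<forall>z. 0 \<le> ?K z y" using K0 by (auto intro: Kt_nonneg[OF st])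
        show "(\<Sum>z\<in>UNIV. q z * ?K z y) = q y" using K0 by (intro Kt_invariant[OF st assms(3)])
        show "0 < q y" by (rule qpos)
        show "\<forall>z. 0 < ell s z" using ppos s qpos by (simp add: ellp)
      qed
      then have "ell t y * ln (ell t y) \<le> (\<Sum>x\<in>UNIV. q x * ?K x y * (ell s x * ln (ell s x))) / q y"
        unfolding L .
      then show ?thesis using qpos[of y] by (simp add: field_simps)
    qed
    have "rel_entropy (p t) q \<le> (\<Sum>y\<in>UNIV. \<Sum>x\<in>UNIV. q x * ?K x y * (ell s x * ln (ell s x)))"
      unfolding Hq by (rule sum_mono) (rule each)
    also have "\<dots> = (\<Sum>x\<in>UNIV. q x * (ell s x * ln (ell s x)) * (\<Sum>y\<in>UNIV. ?K x y))"
      by (subst sum.swap) (simp add: sum_distrib_left mult.commute mult.left_commute)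
    also have "\<dots> = rel_entropy (p s) q"
      unfolding Hq using Kt_rowsum[OF st K0] by simp
    finally show "rel_entropy (p t) q \<le> rel_entropy (p s) q" .
  qed

  have part2c: "((\<lambda>t. rel_entropy (p t) q) \<longlongrightarrow> 0) at_top"
  proof -
    define \<delta> where "\<delta> = Min (range (\<lambda>(x, y). Kt Pi 1 x y))"
    have fr: "finite (range (\<lambda>(x::'s, y::'s). Kt Pi 1 x y))" by simp
    have Kd: "\<forall>x y. \<delta> \<le> Kt Pi 1 x y"
      unfolding \<delta>_def using fr by (auto intro!: Min_le)
    have Kpos: "0 < Kt Pi 1 x y" for x y
    proof -
      obtain n where n: "0 < mpow Pi n x y" using assms(2) by (auto simp: irreducible_matrix_def)
      have "0 < pois 1 n * mpow Pi n x y" using n by (simp add: pois_def)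
      also have "\<dots> \<le> Kt Pi 1 x y" by (rule Kt_ge_term[OF st]) simp
      finally show ?thesis .
    qed
    have d: "0 < \<delta>"
    proof -
      have "\<delta> \<in> range (\<lambda>(x, y). Kt Pi 1 x y)" unfolding \<delta>_def using fr by (intro Min_in) auto
      then show ?thesis using Kpos by auto
    qed
    have conv: "((\<lambda>t. p t y) \<longlongrightarrow> q y) at_top" for y
    proof (rule doeblin_conv[where K = "Kt Pi 1"])
      show "\<forall>x. (\<Sum>y\<in>UNIV. Kt Pi 1 x y) = 1" using Kt_rowsum[OF st] by simp
      show "\<forall>x y. \<delta> \<le> Kt Pi 1 x y" by (rule Kd)
      show "0 < \<delta>" by (rule d)
      show "p t y = (\<Sum>x\<in>UNIV. p (t - 1) x * Kt Pi 1 x y)" if "1 \<le> t" for t y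
        using pK[of "t - 1" t y] that by simp
      show "q y = (\<Sum>x\<in>UNIV. q x * Kt Pi 1 x y)" for y
        using Kt_invariant[OF st assms(3), of 1 y] by simp
      show "0 \<le> p t y" for t y by (rule pnn)
      show "(\<Sum>y\<in>UNIV. p t y) = 1" for t by (rule ps)
      show "0 \<le> q y" for y by (rule qnn)
      show "(\<Sum>y\<in>UNIV. q y) = 1" by (rule qs)
    qed
    have "((\<lambda>t. \<Sum>y\<in>UNIV. p t y * ln (p t y / q y)) \<longlongrightarrow> (\<Sum>y\<in>UNIV. q y * ln (q y / q y))) at_top"
    proof (intro tendsto_sum tendsto_mult tendsto_ln tendsto_divide conv tendsto_const)
      fix y show "q y \<noteq> 0" using qpos[of y] by simp
      show "q y / q y \<noteq> 0" using qpos[of y] by simp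
    qed
    moreover have "(\<Sum>y\<in>UNIV. q y * ln (q y / q y)) = 0"
    proof -
      have "q y / q y = 1" for y using qpos[of y] by simp
      then show ?thesis by simp
    qed
    ultimately show ?thesis unfolding rel_entropy_def by simp
  qed

  show ?thesis using part1 part2a part2b part2c part3 by blast
qed


end
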